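(* In the upper half-plane model of $\mathbb{H}^2$, let $B_i=B(c_i,r_i)$, $i\in\mathbb{N}$, be pairwise disjoint closed Euclidean disks with centers $c_i\in\mathbb{Z}\subset\mathbb{R}$, let $h_i\in\mathrm{Isom}(\mathbb{H}^2)$ be the inversion in $\partial B_i$, and let $C_i=\partial B_i\cap\mathbb{H}^2$. Fix $k\in\mathbb{N}_0$, let $\Gamma_k$ be the subgroup generated by $\{h_i:i>k\}$ and $\Lambda_k$ its limit set. For $n\ge1$ let $I_{k,n}$ be the set of reduced multi-indices $\underline{i}=(i_1,\dots,i_n)$ with all $i_m>k$ and $i_m\ne i_{m+1}$ for all $m$; for such $\underline{i}$ let $c_{\underline{i}}$ and $r_{\underline{i}}$ be the Euclidean center and radius of the semicircle $C_{\underline{i}}=h_{i_1}\circ\cdots\circ h_{i_{n-1}}(C_{i_n})$. Let $\alpha>0$ and suppose that $\sum_{i=k+1}^{\infty}r_i^{\alpha}<\infty$ and that for every $n\ge2$, $$\sum_{\underline{i}\in I_{k,n}}r_{\underline{i}}^{\alpha}\le\sum_{\underline{j}\in I_{k,n-1}}r_{\underline{j}}^{\alpha}.$$ Then $\dim\Lambda_k\le\alpha$.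
   Context: The limit set of a discrete subgroup of $\mathrm{Isom}(\mathbb{H}^2)$ is the accumulation set in $\partial_\infty\mathbb{H}^2=\mathbb{R}\cup\{\infty\}$ of one of its orbits; $\dim$ denotes Hausdorff dimension (computed in the Euclidean metric on $\mathbb{R}$; the point $\infty$ does not affect it). *)

theory Defs
  imports "HOL-Analysis.Analysis"
begin

definition upper :: "complex set" where
  "upper = {z. Im z > 0}"

definition inversion :: "complex \<Rightarrow> real \<Rightarrow> complex \<Rightarrow> complex" where
  "inversion a \<rho> z = a + complex_of_real (\<rho>\<^sup>2) / cnj (z - a)"

definition semicircle :: "complex \<Rightarrow> real \<Rightarrow> complex set" where
  "semicircle a \<rho> = sphere a \<rho> \<inter> upper"

text \<open>Group generated by a set of maps (for involutive generators, such as
  inversions, finite compositions of generators already form the group).\<close>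
inductive_set gen_by :: "('a \<Rightarrow> 'a) set \<Rightarrow> ('a \<Rightarrow> 'a) set" for H where
  gen_id: "id \<in> gen_by H"
| gen_step: "g \<in> gen_by H \<Longrightarrow> h \<in> H \<Longrightarrow> h \<circ> g \<in> gen_by H"

text \<open>Real part of the limit set: accumulation points on the real line of the
  orbit of z0 (the point at infinity does not affect Hausdorff dimension).\<close>
definition limit_set :: "(complex \<Rightarrow> complex) set \<Rightarrow> complex \<Rightarrow> real set" where
  "limit_set G z0 = {x. complex_of_real x islimpt ((\<lambda>g. g z0) ` G)}"

definition reduced_words :: "nat \<Rightarrow> nat \<Rightarrow> nat list set" where
  "reduced_words k n = {w. length w = n \<and> (\<forall>m\<in>set w. k < m) \<and>
      (\<forall>m. Suc m < n \<longrightarrow> w ! m \<noteq> w ! Suc m)}"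

definition gen_map :: "(nat \<Rightarrow> int) \<Rightarrow> (nat \<Rightarrow> real) \<Rightarrow> nat \<Rightarrow> complex \<Rightarrow> complex" where
  "gen_map c r i = inversion (of_int (c i)) (r i)"

definition word_map :: "(nat \<Rightarrow> int) \<Rightarrow> (nat \<Rightarrow> real) \<Rightarrow> nat list \<Rightarrow> complex \<Rightarrow> complex" where
  "word_map c r w = foldr (\<circ>) (map (gen_map c r) w) id"

definition word_semicircle :: "(nat \<Rightarrow> int) \<Rightarrow> (nat \<Rightarrow> real) \<Rightarrow> nat list \<Rightarrow> complex set" where
  "word_semicircle c r w =
     word_map c r (butlast w) ` semicircle (of_int (c (last w))) (r (last w))"

definition word_radius :: "(nat \<Rightarrow> int) \<Rightarrow> (nat \<Rightarrow> real) \<Rightarrow> nat list \<Rightarrow> real" where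
  "word_radius c r w =
     (THE \<rho>. 0 < \<rho> \<and> (\<exists>a::real. word_semicircle c r w = semicircle (complex_of_real a) \<rho>))"

definition hausdorff_pre :: "real \<Rightarrow> real \<Rightarrow> real set \<Rightarrow> ennreal" where
  "hausdorff_pre s \<delta> A =
     (INF U \<in> {U :: nat \<Rightarrow> real set. A \<subseteq> (\<Union>j. U j) \<and>
                 (\<forall>j. bounded (U j) \<and> diameter (U j) \<le> \<delta>)}.
        (\<Sum>j. ennreal (diameter (U j) powr s)))"

definition hausdorff_measure :: "real \<Rightarrow> real set \<Rightarrow> ennreal" where
  "hausdorff_measure s A = (SUP \<delta> \<in> {0<..}. hausdorff_pre s \<delta> A)"

definition hausdorff_dim :: "real set \<Rightarrow> real" where
  "hausdorff_dim A = Inf {s. 0 \<le> s \<and> hausdorff_measure s A = 0}"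

end

theory Submission
  imports Defs
begin


lemma inv_Re: "Re (inversion (of_real a) \<rho> z) = a + \<rho>\<^sup>2 * (Re z - a) / ((Re z - a)\<^sup>2 + (Im z)\<^sup>2)"
  unfolding inversion_def by (simp add: Re_divide power2_eq_square)

lemma inv_Im: "Im (inversion (of_real a) \<rho> z) = \<rho>\<^sup>2 * Im z / ((Re z - a)\<^sup>2 + (Im z)\<^sup>2)"
  unfolding inversion_def by (simp add: Im_divide power2_eq_square)

lemma inv_invol: assumes F: "\<rho> \<noteq> 0" shows "inversion a \<rho> (inversion a \<rho> z) = z"
proof (cases "z = a")
  case True then show ?thesis by (simp add: inversion_def)
next
  case False
    have "cnj (z - a) \<noteq> 0" using False by simp
    then show ?thesis using F False unfolding inversion_def
      by (simp add: field_simps)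
qed

lemma circ_identity:
  fixes a b \<rho> s x y :: real
  assumes N: "(x - a)\<^sup>2 + y\<^sup>2 \<noteq> 0" and D: "(b - a)\<^sup>2 - s\<^sup>2 \<noteq> 0"
  shows "(a + \<rho>\<^sup>2 * (x - a) / ((x - a)\<^sup>2 + y\<^sup>2) - (a + \<rho>\<^sup>2 * (b - a) / ((b - a)\<^sup>2 - s\<^sup>2)))\<^sup>2
     + (\<rho>\<^sup>2 * y / ((x - a)\<^sup>2 + y\<^sup>2))\<^sup>2 - (\<rho>\<^sup>2 * s / ((b - a)\<^sup>2 - s\<^sup>2))\<^sup>2
     = \<rho>^4 * ((x - b)\<^sup>2 + y\<^sup>2 - s\<^sup>2) / (((x - a)\<^sup>2 + y\<^sup>2) * ((b - a)\<^sup>2 - s\<^sup>2))"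
proof -
  define u where "u = x - a"
  define \<beta> where "\<beta> = b - a"
  define NN where "NN = u\<^sup>2 + y\<^sup>2"
  define DD where "DD = \<beta>\<^sup>2 - s\<^sup>2"
  have NN: "NN \<noteq> 0" using N by (simp add: NN_def u_def)
  have DD: "DD \<noteq> 0" using D by (simp add: DD_def \<beta>_def)
  have xb: "x - b = u - \<beta>" by (simp add: u_def \<beta>_def)
  have "(a + \<rho>\<^sup>2 * u / NN - (a + \<rho>\<^sup>2 * \<beta> / DD))\<^sup>2 + (\<rho>\<^sup>2 * y / NN)\<^sup>2 - (\<rho>\<^sup>2 * s / DD)\<^sup>2
      = \<rho>^4 * ((u\<^sup>2 + y\<^sup>2) / NN\<^sup>2 - 2 * u * \<beta> / (NN * DD) + (\<beta>\<^sup>2 - s\<^sup>2) / DD\<^sup>2)"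
    using NN DD by (simp add: divide_simps power2_eq_square) (simp add: algebra_simps eval_nat_numeral)
  also have "\<dots> = \<rho>^4 * (1 / NN - 2 * u * \<beta> / (NN * DD) + 1 / DD)"
    using NN DD unfolding NN_def[symmetric] DD_def[symmetric] by (simp add: power2_eq_square)
  also have "\<dots> = \<rho>^4 * (DD - 2 * u * \<beta> + NN) / (NN * DD)"
    using NN DD by (simp add: field_simps)
  also have "DD - 2 * u * \<beta> + NN = (u - \<beta>)\<^sup>2 + y\<^sup>2 - s\<^sup>2"
    by (simp add: DD_def NN_def power2_eq_square algebra_simps)
  finally show ?thesis unfolding u_def[symmetric] \<beta>_def[symmetric] NN_def[symmetric] DD_def[symmetric] xb .
qed


lemma cmod_sq_Re_Im: "(cmod (w - complex_of_real b))\<^sup>2 = (Re w - b)\<^sup>2 + (Im w)\<^sup>2"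
  by (simp add: cmod_power2)

lemma N_pos: "z \<noteq> complex_of_real a \<Longrightarrow> (Re z - a)\<^sup>2 + (Im z)\<^sup>2 > 0"
proof -
  assume "z \<noteq> complex_of_real a"
  then have "Re z \<noteq> a \<or> Im z \<noteq> 0" by (auto simp: complex_eq_iff)
  then show ?thesis by (auto simp: add_pos_nonneg add_nonneg_pos)
qed

lemma inv_at_center: "inversion a \<rho> a = a"
  by (simp add: inversion_def)

lemma inv_circle_sign:
  fixes a b \<rho> s :: real
  assumes \<rho>: "\<rho> \<noteq> 0" and s: "0 \<le> s" and ab: "s < \<bar>b - a\<bar>"
  defines "D \<equiv> (b - a)\<^sup>2 - s\<^sup>2"
  shows "(cmod (inversion (of_real a) \<rho> z - of_real (a + \<rho>\<^sup>2 * (b - a) / D)))\<^sup>2 - (\<rho>\<^sup>2 * s / D)\<^sup>2 > 0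
           \<longleftrightarrow> (cmod (z - of_real b))\<^sup>2 - s\<^sup>2 > 0"
    and "(cmod (inversion (of_real a) \<rho> z - of_real (a + \<rho>\<^sup>2 * (b - a) / D)))\<^sup>2 - (\<rho>\<^sup>2 * s / D)\<^sup>2 = 0
           \<longleftrightarrow> (cmod (z - of_real b))\<^sup>2 - s\<^sup>2 = 0"
proof -
  have sq: "s\<^sup>2 < (b - a)\<^sup>2"
    using power_strict_mono[OF ab s, of 2] by simp
  have Dpos: "D > 0" unfolding D_def using sq by simp
  have "((cmod (inversion (of_real a) \<rho> z - of_real (a + \<rho>\<^sup>2 * (b - a) / D)))\<^sup>2 - (\<rho>\<^sup>2 * s / D)\<^sup>2 > 0
           \<longleftrightarrow> (cmod (z - of_real b))\<^sup>2 - s\<^sup>2 > 0) \<and>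
        ((cmod (inversion (of_real a) \<rho> z - of_real (a + \<rho>\<^sup>2 * (b - a) / D)))\<^sup>2 - (\<rho>\<^sup>2 * s / D)\<^sup>2 = 0
           \<longleftrightarrow> (cmod (z - of_real b))\<^sup>2 - s\<^sup>2 = 0)"
  proof (cases "z = of_real a")
    case True
    have "cmod (z - of_real b) = \<bar>b - a\<bar>" using True
      by (metis norm_minus_commute norm_of_real of_real_diff)
    then have 1: "(cmod (z - of_real b))\<^sup>2 - s\<^sup>2 > 0" using sq by simp
    have e: "a - (a + \<rho>\<^sup>2 * (b - a) / D) = - (\<rho>\<^sup>2 * (b - a) / D)" by simp
    have "\<bar>\<rho>\<^sup>2 * (b - a) / D\<bar> > \<rho>\<^sup>2 * s / D"
      using Dpos ab \<rho> by (simp add: abs_mult divide_strict_right_mono)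
    moreover have "0 \<le> \<rho>\<^sup>2 * s / D" using s Dpos by simp
    ultimately have lt: "(\<rho>\<^sup>2 * s / D)\<^sup>2 < (\<bar>\<rho>\<^sup>2 * (b - a) / D\<bar>)\<^sup>2"
      by (simp add: power_strict_mono)
    have "cmod (inversion (of_real a) \<rho> z - of_real (a + \<rho>\<^sup>2 * (b - a) / D)) = \<bar>\<rho>\<^sup>2 * (b - a) / D\<bar>"
      using True by (simp only: inv_at_center flip: of_real_diff) (simp only: e norm_of_real abs_minus_cancel)
    then have 2: "(cmod (inversion (of_real a) \<rho> z - of_real (a + \<rho>\<^sup>2 * (b - a) / D)))\<^sup>2 - (\<rho>\<^sup>2 * s / D)\<^sup>2 > 0"
      using lt by simp
    show ?thesis using 1 2 by simp
  next
    case False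
    have N: "(Re z - a)\<^sup>2 + (Im z)\<^sup>2 > 0" using N_pos[OF False] .
    have eq: "(cmod (inversion (of_real a) \<rho> z - of_real (a + \<rho>\<^sup>2 * (b - a) / D)))\<^sup>2 - (\<rho>\<^sup>2 * s / D)\<^sup>2
        = \<rho>^4 * ((cmod (z - of_real b))\<^sup>2 - s\<^sup>2) / (((Re z - a)\<^sup>2 + (Im z)\<^sup>2) * D)"
      unfolding cmod_sq_Re_Im inv_Re inv_Im D_def
      using circ_identity[of "Re z" a "Im z" b s \<rho>] N Dpos unfolding D_def
      by (metis (no_types, lifting) less_numeral_extra(3) add_diff_cancel_left')
    have fpos: "\<rho>^4 / (((Re z - a)\<^sup>2 + (Im z)\<^sup>2) * D) > 0" using N Dpos \<rho> by simp
    have eq2: "\<rho>^4 * ((cmod (z - of_real b))\<^sup>2 - s\<^sup>2) / (((Re z - a)\<^sup>2 + (Im z)\<^sup>2) * D)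
       = (\<rho>^4 / (((Re z - a)\<^sup>2 + (Im z)\<^sup>2) * D)) * ((cmod (z - of_real b))\<^sup>2 - s\<^sup>2)" by simp
    have gen: "\<And>F X::real. F > 0 \<Longrightarrow> (0 < F * X \<longleftrightarrow> 0 < X) \<and> (F * X = 0 \<longleftrightarrow> X = 0)"
      by (simp add: zero_less_mult_iff)
    show ?thesis unfolding eq eq2 using gen[OF fpos] by blast
  qed
  then show "(cmod (inversion (of_real a) \<rho> z - of_real (a + \<rho>\<^sup>2 * (b - a) / D)))\<^sup>2 - (\<rho>\<^sup>2 * s / D)\<^sup>2 > 0
           \<longleftrightarrow> (cmod (z - of_real b))\<^sup>2 - s\<^sup>2 > 0"
    and "(cmod (inversion (of_real a) \<rho> z - of_real (a + \<rho>\<^sup>2 * (b - a) / D)))\<^sup>2 - (\<rho>\<^sup>2 * s / D)\<^sup>2 = 0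
           \<longleftrightarrow> (cmod (z - of_real b))\<^sup>2 - s\<^sup>2 = 0" by auto
qed


lemma inv_Im_pos:
  assumes "\<rho> \<noteq> 0"
  shows "Im (inversion (of_real a) \<rho> z) > 0 \<longleftrightarrow> Im z > 0"
proof (cases "z = of_real a")
  case True then show ?thesis by (simp add: inv_at_center)
next
  case False
  have N: "(Re z - a)\<^sup>2 + (Im z)\<^sup>2 > 0" using N_pos[OF False] .
  have r: "\<rho>\<^sup>2 > 0" using assms by simp
  show ?thesis unfolding inv_Im using N r
    by (simp add: zero_less_divide_iff zero_less_mult_iff)
qed

lemma img_invol:
  assumes "\<rho> \<noteq> 0"
  shows "inversion a \<rho> ` A = {w. inversion a \<rho> w \<in> A}"
proof
  show "inversion a \<rho> ` A \<subseteq> {w. inversion a \<rho> w \<in> A}"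
    using inv_invol[OF assms] by auto
  show "{w. inversion a \<rho> w \<in> A} \<subseteq> inversion a \<rho> ` A"
  proof
    fix w assume "w \<in> {w. inversion a \<rho> w \<in> A}"
    then have "inversion a \<rho> w \<in> A" by simp
    moreover have "w = inversion a \<rho> (inversion a \<rho> w)" using inv_invol[OF assms] by simp
    ultimately show "w \<in> inversion a \<rho> ` A" by blast
  qed
qed

lemma le_iff_sq: "0 \<le> (x::real) \<Longrightarrow> 0 \<le> s \<Longrightarrow> (x \<le> s \<longleftrightarrow> \<not> (x\<^sup>2 - s\<^sup>2 > 0))"
proof -
  assume a: "0 \<le> x" "0 \<le> s"
  have "x \<le> s \<longleftrightarrow> x\<^sup>2 \<le> s\<^sup>2" using power_mono[of x s 2] power2_le_imp_le[of x s] a by auto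
  then show ?thesis by linarith
qed

lemma eq_iff_sq: "0 \<le> (x::real) \<Longrightarrow> 0 \<le> s \<Longrightarrow> (x = s \<longleftrightarrow> x\<^sup>2 - s\<^sup>2 = 0)"
  by (simp add: power2_eq_iff_nonneg)

lemma mem_cball_alt: "z \<in> cball x e \<longleftrightarrow> cmod (z - x) \<le> e"
  by (metis dist_norm mem_cball norm_minus_commute)

lemma mem_sphere_alt: "z \<in> sphere x e \<longleftrightarrow> cmod (z - x) = e"
  by (metis dist_norm mem_sphere norm_minus_commute)

lemma inv_img_disk:
  fixes a b \<rho> s :: real
  assumes \<rho>: "\<rho> \<noteq> 0" and s: "0 \<le> s" and ab: "s < \<bar>b - a\<bar>"
  defines "D \<equiv> (b - a)\<^sup>2 - s\<^sup>2"
  shows "inversion (of_real a) \<rho> ` cball (of_real b) s = cball (of_real (a + \<rho>\<^sup>2 * (b - a) / D)) (\<rho>\<^sup>2 * s / D)"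
    and "inversion (of_real a) \<rho> ` (sphere (of_real b) s \<inter> upper)
          = sphere (of_real (a + \<rho>\<^sup>2 * (b - a) / D)) (\<rho>\<^sup>2 * s / D) \<inter> upper"
    and "D > 0"
proof -
  have sq: "s\<^sup>2 < (b - a)\<^sup>2"
    using power_strict_mono[OF ab s, of 2] by simp
  show Dpos: "D > 0" unfolding D_def using sq by simp
  let ?h = "inversion (of_real a) \<rho>"
  let ?b' = "a + \<rho>\<^sup>2 * (b - a) / D" and ?s' = "\<rho>\<^sup>2 * s / D"
  have s': "0 \<le> ?s'" using s Dpos by simp
  note sg = inv_circle_sign[OF \<rho> s ab, folded D_def]
  have key1: "cmod (w - of_real ?b') \<le> ?s' \<longleftrightarrow> cmod (?h w - of_real b) \<le> s" for w
  proof -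
    have "cmod (w - of_real ?b') \<le> ?s' \<longleftrightarrow> \<not> ((cmod (?h (?h w) - of_real ?b'))\<^sup>2 - ?s'\<^sup>2 > 0)"
      using le_iff_sq[OF norm_ge_zero s'] inv_invol[OF \<rho>] by simp
    also have "\<dots> \<longleftrightarrow> \<not> ((cmod (?h w - of_real b))\<^sup>2 - s\<^sup>2 > 0)" using sg(1) by simp
    also have "\<dots> \<longleftrightarrow> cmod (?h w - of_real b) \<le> s" using le_iff_sq[of "cmod (?h w - of_real b)" s] s by simp
    finally show ?thesis .
  qed
  have key2: "cmod (w - of_real ?b') = ?s' \<longleftrightarrow> cmod (?h w - of_real b) = s" for w
  proof -
    have "cmod (w - of_real ?b') = ?s' \<longleftrightarrow> ((cmod (?h (?h w) - of_real ?b'))\<^sup>2 - ?s'\<^sup>2 = 0)"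
      using eq_iff_sq[OF norm_ge_zero s'] inv_invol[OF \<rho>] by simp
    also have "\<dots> \<longleftrightarrow> ((cmod (?h w - of_real b))\<^sup>2 - s\<^sup>2 = 0)" using sg(2) by simp
    also have "\<dots> \<longleftrightarrow> cmod (?h w - of_real b) = s" using eq_iff_sq[of "cmod (?h w - of_real b)" s] s by simp
    finally show ?thesis .
  qed
  show "?h ` cball (of_real b) s = cball (of_real ?b') ?s'"
    unfolding img_invol[OF \<rho>]
  proof (intro set_eqI)
    fix w
    have "w \<in> {w. ?h w \<in> cball (of_real b) s} \<longleftrightarrow> cmod (?h w - of_real b) \<le> s"
      by (simp only: mem_Collect_eq mem_cball_alt)
    also have "\<dots> \<longleftrightarrow> cmod (w - of_real ?b') \<le> ?s'" using key1 by simp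
    also have "\<dots> \<longleftrightarrow> w \<in> cball (of_real ?b') ?s'"
      by (simp only: mem_Collect_eq mem_cball_alt)
    finally show "w \<in> {w. ?h w \<in> cball (of_real b) s} \<longleftrightarrow> w \<in> cball (of_real ?b') ?s'" .
  qed
  show "?h ` (sphere (of_real b) s \<inter> upper) = sphere (of_real ?b') ?s' \<inter> upper"
    unfolding img_invol[OF \<rho>]
  proof (intro set_eqI)
    fix w
    have "w \<in> {w. ?h w \<in> sphere (of_real b) s \<inter> upper} \<longleftrightarrow> cmod (?h w - of_real b) = s \<and> Im (?h w) > 0"
      by (simp only: mem_Collect_eq Int_iff mem_sphere_alt upper_def)
    also have "\<dots> \<longleftrightarrow> cmod (w - of_real ?b') = ?s' \<and> Im w > 0" using key2 inv_Im_pos[OF \<rho>] by simp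
    also have "\<dots> \<longleftrightarrow> w \<in> sphere (of_real ?b') ?s' \<inter> upper"
      by (simp only: mem_Collect_eq Int_iff mem_sphere_alt upper_def)
    finally show "w \<in> {w. ?h w \<in> sphere (of_real b) s \<inter> upper} \<longleftrightarrow> w \<in> sphere (of_real ?b') ?s' \<inter> upper" .
  qed
qed

lemma inv_into_disk:
  assumes \<rho>: "\<rho> > 0" and z: "cmod (z - a) \<ge> \<rho>"
  shows "cmod (inversion a \<rho> z - a) \<le> \<rho>"
proof -
  have zp: "cmod (z - a) > 0" using \<rho> z by linarith
  have "inversion a \<rho> z - a = complex_of_real (\<rho>\<^sup>2) / cnj (z - a)" by (simp add: inversion_def)
  then have "cmod (inversion a \<rho> z - a) = \<rho>\<^sup>2 / cmod (z - a)"
    by (simp add: norm_divide norm_power flip: complex_cnj_diff)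
  also have "\<dots> \<le> \<rho>\<^sup>2 / \<rho>" using \<rho> z zp by (intro divide_left_mono) auto
  also have "\<dots> = \<rho>" by (simp add: power2_eq_square)
  finally show ?thesis .
qed

definition hdist :: "complex \<Rightarrow> complex \<Rightarrow> real" where
  "hdist z w = (cmod (z - w))\<^sup>2 / (Im z * Im w)"

lemma inv_diff:
  assumes "z \<noteq> a" "w \<noteq> a"
  shows "inversion a \<rho> z - inversion a \<rho> w = complex_of_real (\<rho>\<^sup>2) * cnj (w - z) / (cnj (z - a) * cnj (w - a))"
  using assms unfolding inversion_def by (simp add: field_simps)

lemma inv_hdist:
  assumes \<rho>: "\<rho> \<noteq> 0" and z: "Im z > 0" and w: "Im w > 0"
  shows "hdist (inversion (of_real a) \<rho> z) (inversion (of_real a) \<rho> w) = hdist z w"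
proof -
  have za: "z \<noteq> of_real a" "w \<noteq> of_real a" using z w by auto
  have nz: "cmod (z - of_real a) > 0" "cmod (w - of_real a) > 0" using za by auto
  have n1: "cmod (inversion (of_real a) \<rho> z - inversion (of_real a) \<rho> w)
      = \<rho>\<^sup>2 * cmod (w - z) / (cmod (z - of_real a) * cmod (w - of_real a))"
    unfolding inv_diff[OF za]
    by (simp add: norm_divide norm_mult norm_power norm_minus_commute flip: complex_cnj_diff)
  have Nz: "(Re z - a)\<^sup>2 + (Im z)\<^sup>2 = (cmod (z - of_real a))\<^sup>2" by (simp add: cmod_sq_Re_Im)
  have Nw: "(Re w - a)\<^sup>2 + (Im w)\<^sup>2 = (cmod (w - of_real a))\<^sup>2" by (simp add: cmod_sq_Re_Im)
  show ?thesis unfolding hdist_def n1 inv_Im Nz Nw using nz \<rho>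
    by (simp add: field_simps power2_eq_square norm_minus_commute)
qed


locale hset =
  fixes c :: "nat \<Rightarrow> int" and r :: "nat \<Rightarrow> real" and k :: nat
  assumes pos: "\<forall>i\<ge>1. 0 < r i"
    and disj: "\<forall>i\<ge>1. \<forall>j\<ge>1. i \<noteq> j \<longrightarrow>
               cball (of_int (c i) :: complex) (r i) \<inter> cball (of_int (c j)) (r j) = {}"
begin

abbreviation cc :: "nat \<Rightarrow> real" where "cc i \<equiv> real_of_int (c i)"

definition B :: "nat \<Rightarrow> complex set" where "B i = cball (complex_of_real (cc i)) (r i)"

lemma of_int_c: "(of_int (c i) :: complex) = complex_of_real (cc i)" by simp

lemma gen_map_eq: "gen_map c r i = inversion (complex_of_real (cc i)) (r i)"
  by (simp add: gen_map_def)

lemma B_disj: "i \<ge> 1 \<Longrightarrow> j \<ge> 1 \<Longrightarrow> i \<noteq> j \<Longrightarrow> B i \<inter> B j = {}"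
  using disj unfolding B_def by (metis of_int_c)

lemma r_pos: "i \<ge> 1 \<Longrightarrow> r i > 0" using pos by simp

definition redw :: "nat list \<Rightarrow> bool" where
  "redw w \<longleftrightarrow> (\<forall>m\<in>set w. k < m) \<and> successively (\<noteq>) w"

lemma reduced_words_eq: "reduced_words k n = {w. length w = n \<and> redw w}"
  by (auto simp: reduced_words_def redw_def successively_conv_nth)

lemma redw_ConsD: "redw (i # w) \<Longrightarrow> redw w"
  by (auto simp: redw_def successively_Cons)

lemma redw_Cons2: "redw (i # j # w) \<longleftrightarrow> k < i \<and> i \<noteq> j \<and> redw (j # w)"
  by (auto simp: redw_def)

fun wcr :: "nat list \<Rightarrow> real \<times> real" where
  "wcr [] = (0, 0)"
| "wcr [i] = (cc i, r i)"
| "wcr (i # j # u) = (case wcr (j # u) of (b, s) \<Rightarrow>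
      (cc i + (r i)\<^sup>2 * (b - cc i) / ((b - cc i)\<^sup>2 - s\<^sup>2), (r i)\<^sup>2 * s / ((b - cc i)\<^sup>2 - s\<^sup>2)))"

definition Dset :: "nat list \<Rightarrow> complex set" where
  "Dset u = word_map c r (butlast u) ` B (last u)"

lemma word_map_Nil: "word_map c r [] = id" by (simp add: word_map_def)

lemma word_map_Cons: "word_map c r (i # w) = gen_map c r i \<circ> word_map c r w"
  by (simp add: word_map_def)

lemma Dset_single: "Dset [i] = B i" by (simp add: Dset_def word_map_Nil)

lemma Dset_Cons: "u \<noteq> [] \<Longrightarrow> Dset (i # u) = gen_map c r i ` Dset u"
  by (simp add: Dset_def word_map_Cons image_comp)

lemma ws_single: "word_semicircle c r [i] = semicircle (complex_of_real (cc i)) (r i)"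
  by (simp add: word_semicircle_def word_map_Nil)

lemma ws_Cons: "u \<noteq> [] \<Longrightarrow> word_semicircle c r (i # u) = gen_map c r i ` word_semicircle c r u"
  by (simp add: word_semicircle_def word_map_Cons image_comp)

lemma center_in_B: "i \<ge> 1 \<Longrightarrow> complex_of_real (cc i) \<in> B i"
  using r_pos by (simp add: B_def less_imp_le)

lemma disk_struct:
  "redw u \<Longrightarrow> u \<noteq> [] \<Longrightarrow>
     Dset u = cball (complex_of_real (fst (wcr u))) (snd (wcr u)) \<and>
     word_semicircle c r u = semicircle (complex_of_real (fst (wcr u))) (snd (wcr u)) \<and>
     0 < snd (wcr u) \<and> Dset u \<subseteq> B (hd u)"
proof (induction u rule: wcr.induct)
  case 1 then show ?case by simp
next
  case (2 i)
  then have "i \<ge> 1" by (simp add: redw_def)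
  then show ?case using r_pos[of i]
    by (simp add: Dset_single ws_single B_def semicircle_def)
next
  case (3 i j u)
  have red: "redw (j # u)" and ij: "i \<noteq> j" and ki: "k < i" using "3.prems" redw_Cons2 by auto
  have kj: "k < j" using red by (simp add: redw_def)
  have i1: "i \<ge> 1" and j1: "j \<ge> 1" using ki kj by auto
  obtain b s where bs: "wcr (j # u) = (b, s)" by (cases "wcr (j # u)")
  from "3.IH"[OF red] bs have D: "Dset (j # u) = cball (complex_of_real b) s"
    and Ws: "word_semicircle c r (j # u) = semicircle (complex_of_real b) s"
    and s: "0 < s" and sub: "Dset (j # u) \<subseteq> B j" by auto
  have disjij: "B i \<inter> B j = {}" using B_disj[OF i1 j1 ij] .
  have "complex_of_real (cc i) \<notin> cball (complex_of_real b) s"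
    using center_in_B[OF i1] disjij sub D by blast
  then have nm: "\<not> cmod (complex_of_real (cc i) - complex_of_real b) \<le> s"
    unfolding mem_cball_alt .
  have e: "cmod (complex_of_real (cc i) - complex_of_real b) = \<bar>cc i - b\<bar>"
    by (metis norm_of_real of_real_diff)
  have "\<not> \<bar>cc i - b\<bar> \<le> s" using nm unfolding e .
  then have sb: "s < \<bar>b - cc i\<bar>" by (simp add: abs_minus_commute)
  have ri: "r i \<noteq> 0" using r_pos[OF i1] by simp
  note I = inv_img_disk[OF ri less_imp_le[OF s] sb]
  have w: "wcr (i # j # u) = (cc i + (r i)\<^sup>2 * (b - cc i) / ((b - cc i)\<^sup>2 - s\<^sup>2), (r i)\<^sup>2 * s / ((b - cc i)\<^sup>2 - s\<^sup>2))"
    using bs by simp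
  have 1: "Dset (i # j # u) = cball (complex_of_real (fst (wcr (i # j # u)))) (snd (wcr (i # j # u)))"
    unfolding w Dset_Cons[of "j # u", simplified] D gen_map_eq using I(1) by simp
  have 2: "word_semicircle c r (i # j # u) = semicircle (complex_of_real (fst (wcr (i # j # u)))) (snd (wcr (i # j # u)))"
    unfolding w ws_Cons[of "j # u", simplified] Ws gen_map_eq semicircle_def using I(2) by simp
  have 3: "0 < snd (wcr (i # j # u))" unfolding w using I(3) s ri by simp
  have 4: "Dset (i # j # u) \<subseteq> B i"
  proof
    fix x assume "x \<in> Dset (i # j # u)"
    then obtain z where z: "z \<in> Dset (j # u)" and x: "x = gen_map c r i z"
      using Dset_Cons[of "j # u" i] by auto
    have "z \<notin> ball (complex_of_real (cc i)) (r i)" using z sub disjij ball_subset_cball unfolding B_def by blast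
    then have "cmod (z - complex_of_real (cc i)) \<ge> r i"
      by (simp add: dist_norm norm_minus_commute)
    then have "cmod (x - complex_of_real (cc i)) \<le> r i"
      using inv_into_disk[OF r_pos[OF i1]] x gen_map_eq by simp
    then show "x \<in> B i" unfolding B_def mem_cball_alt .
  qed
  show ?case using 1 2 3 4 by simp
qed

lemma semi_unique:
  assumes "0 < \<rho>" "0 < \<rho>'" "semicircle (complex_of_real a) \<rho> = semicircle (complex_of_real a') \<rho>'"
  shows "\<rho> = \<rho>'"
proof -
  have one: "\<rho> \<le> \<rho>'" if "0 < \<rho>" "0 < \<rho>'" "semicircle (complex_of_real a) \<rho> = semicircle (complex_of_real a') \<rho>'"
    for a a' \<rho> \<rho>'
  proof -
    let ?z = "complex_of_real a + \<i> * complex_of_real \<rho>"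
    have "cmod (?z - complex_of_real a) = \<rho>" using that(1) by (simp add: norm_mult)
    moreover have "Im ?z > 0" using that(1) by simp
    ultimately have "?z \<in> semicircle (complex_of_real a) \<rho>"
      by (simp add: semicircle_def upper_def mem_sphere_alt del: mem_sphere)
    then have "?z \<in> semicircle (complex_of_real a') \<rho>'" using that(3) by simp
    then have "cmod (?z - complex_of_real a') = \<rho>'"
      unfolding semicircle_def Int_iff mem_sphere_alt by blast
    moreover have "\<bar>Im (?z - complex_of_real a')\<bar> \<le> cmod (?z - complex_of_real a')" by (rule abs_Im_le_cmod)
    ultimately show ?thesis using that(1) by simp
  qed
  show ?thesis using one[OF assms] one[OF assms(2,1) assms(3)[symmetric]] by simp
qed

lemma word_radius_eq:
  assumes "redw u" "u \<noteq> []"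
  shows "word_radius c r u = snd (wcr u)"
proof -
  note ds = disk_struct[OF assms]
  show ?thesis unfolding word_radius_def
  proof (rule the_equality)
    show "0 < snd (wcr u) \<and> (\<exists>a. word_semicircle c r u = semicircle (complex_of_real a) (snd (wcr u)))"
      using ds by blast
    fix \<rho> assume "0 < \<rho> \<and> (\<exists>a. word_semicircle c r u = semicircle (complex_of_real a) \<rho>)"
    then obtain a where "0 < \<rho>" "word_semicircle c r u = semicircle (complex_of_real a) \<rho>" by blast
    then show "\<rho> = snd (wcr u)" using ds semi_unique[of \<rho> "snd (wcr u)" a "fst (wcr u)"] by simp
  qed
qed

lemma decay:
  assumes "redw (i # j # u)"
  shows "snd (wcr (i # j # u)) \<le> (r i / (\<bar>cc i - cc j\<bar> - r j))\<^sup>2 * snd (wcr (j # u))"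
proof -
  have red: "redw (j # u)" and ij: "i \<noteq> j" and ki: "k < i" using assms redw_Cons2 by auto
  have kj: "k < j" using red by (simp add: redw_def)
  have i1: "i \<ge> 1" and j1: "j \<ge> 1" using ki kj by auto
  obtain b s where bs: "wcr (j # u) = (b, s)" by (cases "wcr (j # u)")
  from disk_struct[OF red] bs have D: "Dset (j # u) = cball (complex_of_real b) s"
    and s: "0 < s" and sub: "Dset (j # u) \<subseteq> B j" by auto
  have "cball (complex_of_real b) s \<subseteq> cball (complex_of_real (cc j)) (r j)"
    using sub D B_def by simp
  then have "dist (complex_of_real b) (complex_of_real (cc j)) + s \<le> r j"
    using s by (simp add: cball_subset_cball_iff)
  then have bj: "\<bar>b - cc j\<bar> + s \<le> r j" unfolding dist_of_real dist_real_def .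
  have disjij: "B i \<inter> B j = {}" using B_disj[OF i1 j1 ij] .
  have "complex_of_real (cc i) \<notin> B j" using center_in_B[OF i1] disjij by blast
  then have nm: "\<not> cmod (complex_of_real (cc i) - complex_of_real (cc j)) \<le> r j"
    unfolding B_def mem_cball_alt .
  have e: "cmod (complex_of_real (cc i) - complex_of_real (cc j)) = \<bar>cc i - cc j\<bar>"
    by (metis norm_of_real of_real_diff)
  define g where "g = \<bar>cc i - cc j\<bar> - r j"
  have gpos: "g > 0" using nm unfolding e g_def by simp
  have bi: "\<bar>b - cc i\<bar> \<ge> g + s" using bj unfolding g_def by linarith
  have "(b - cc i)\<^sup>2 - s\<^sup>2 = (\<bar>b - cc i\<bar> - s) * (\<bar>b - cc i\<bar> + s)"
    by (simp add: power2_eq_square algebra_simps)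
  also have "\<dots> \<ge> g * g" using bi gpos s by (intro mult_mono) auto
  finally have Dge: "(b - cc i)\<^sup>2 - s\<^sup>2 \<ge> g\<^sup>2" by (simp add: power2_eq_square)
  have gsq: "g\<^sup>2 > 0" using gpos by simp
  have "snd (wcr (i # j # u)) = (r i)\<^sup>2 * s / ((b - cc i)\<^sup>2 - s\<^sup>2)" using bs by simp
  also have "\<dots> \<le> (r i)\<^sup>2 * s / g\<^sup>2"
  proof -
    have Dp: "(b - cc i)\<^sup>2 - s\<^sup>2 > 0" using Dge gsq by linarith
    have p: "0 < ((b - cc i)\<^sup>2 - s\<^sup>2) * g\<^sup>2" using Dp gsq by (rule mult_pos_pos)
    have q: "0 \<le> (r i)\<^sup>2 * s" using s by simp
    show ?thesis by (rule divide_left_mono[OF Dge q p])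
  qed
  also have "\<dots> = (r i / g)\<^sup>2 * s" by (simp add: power_divide)
  finally show ?thesis using bs unfolding g_def by simp
qed

lemma word_map_append: "word_map c r (xs @ ys) = word_map c r xs \<circ> word_map c r ys"
  by (induction xs) (auto simp: word_map_Nil word_map_Cons)

lemma redw_append: "redw (xs @ ys) \<Longrightarrow> redw xs \<and> redw ys"
  by (auto simp: redw_def successively_append_iff)

lemma redw_append_last: "redw (xs @ ys) \<Longrightarrow> xs \<noteq> [] \<Longrightarrow> ys \<noteq> [] \<Longrightarrow> last xs \<noteq> hd ys"
  by (auto simp: redw_def successively_append_iff)

lemma wm_in_D:
  assumes "u \<noteq> []" "k < last u" "cmod (y - complex_of_real (cc (last u))) \<ge> r (last u)"
  shows "word_map c r u y \<in> Dset u"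
proof -
  have u: "u = butlast u @ [last u]" using assms(1) by simp
  have wm: "word_map c r u y = word_map c r (butlast u) (gen_map c r (last u) y)"
    by (subst u, simp add: word_map_append word_map_Cons word_map_Nil)
  have "cmod (gen_map c r (last u) y - complex_of_real (cc (last u))) \<le> r (last u)"
    unfolding gen_map_eq using inv_into_disk[OF r_pos assms(3)] assms(2) by simp
  then have "gen_map c r (last u) y \<in> B (last u)" unfolding B_def mem_cball_alt .
  then show ?thesis unfolding wm Dset_def by blast
qed

lemma outside_of_B:
  assumes "y \<in> B j" "j \<ge> 1" "i \<ge> 1" "i \<noteq> j"
  shows "cmod (y - complex_of_real (cc i)) \<ge> r i"
proof -
  have "y \<notin> ball (complex_of_real (cc i)) (r i)"
    using assms B_disj[of i j] ball_subset_cball unfolding B_def by blast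
  then show ?thesis by (simp add: dist_norm norm_minus_commute)
qed

definition good :: "complex \<Rightarrow> bool" where
  "good z \<longleftrightarrow> (\<forall>i>k. cmod (z - complex_of_real (cc i)) \<ge> r i)"

lemma orbit_in_D:
  assumes "good z1" "redw w" "1 \<le> n" "n \<le> length w"
  shows "word_map c r w z1 \<in> Dset (take n w)"
proof -
  let ?u = "take n w" and ?v = "drop n w"
  have w: "w = ?u @ ?v" by simp
  have u: "?u \<noteq> []" using assms(3,4) by (cases w) auto
  have ru: "redw ?u" and rv: "redw ?v" using redw_append[of ?u ?v] assms(2) by auto
  have kl: "k < last ?u" using ru u by (simp add: redw_def)
  have y: "cmod (word_map c r ?v z1 - complex_of_real (cc (last ?u))) \<ge> r (last ?u)"
  proof (cases "?v = []")
    case True then show ?thesis using assms(1) kl by (simp add: good_def word_map_Nil)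
  next
    case False
    have lv: "k < last ?v" using rv False last_in_set unfolding redw_def by blast
    have hv: "k < hd ?v" using rv False hd_in_set unfolding redw_def by blast
    have "word_map c r ?v z1 \<in> Dset ?v"
      using wm_in_D[OF False lv] assms(1) lv unfolding good_def by blast
    then have "word_map c r ?v z1 \<in> B (hd ?v)" using disk_struct[OF rv False] by blast
    moreover have "last ?u \<noteq> hd ?v" using redw_append_last[of ?u ?v] assms(2) u False by simp
    ultimately show ?thesis using outside_of_B[of _ "hd ?v" "last ?u"] hv kl by simp
  qed
  have "word_map c r w z1 = word_map c r ?u (word_map c r ?v z1)"
    by (metis w word_map_append comp_apply)
  then show ?thesis using wm_in_D[OF u kl y] by simp
qed

end


declare of_real_of_int_eq[simp del]

context hset begin

lemma gen_invol: "k < i \<Longrightarrow> gen_map c r i \<circ> gen_map c r i = id"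
  using inv_invol r_pos[of i] unfolding gen_map_def by (auto simp: fun_eq_iff)

lemma gen_invol': "k < i \<Longrightarrow> gen_map c r i (gen_map c r i z) = z"
  using gen_invol[of i] by (simp add: fun_eq_iff)

lemma gen_by_word:
  "g \<in> gen_by {gen_map c r i | i. k < i} \<Longrightarrow> \<exists>w. redw w \<and> g = word_map c r w"
proof (induction rule: gen_by.induct)
  case gen_id
  show ?case by (rule exI[of _ "[]"]) (simp add: redw_def word_map_Nil)
next
  case (gen_step g h)
  obtain w where w: "redw w" "g = word_map c r w" using gen_step.IH by blast
  obtain i where i: "k < i" "h = gen_map c r i" using gen_step.hyps(2) by blast
  show ?case
  proof (cases w)
    case Nil
    then show ?thesis using w i by (intro exI[of _ "[i]"]) (simp add: redw_def word_map_Cons word_map_Nil)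
  next
    case (Cons j w')
    show ?thesis
    proof (cases "j = i")
      case True
      have "h \<circ> g = word_map c r w'"
        using w i Cons True gen_invol'[of i] by (simp add: word_map_Cons fun_eq_iff)
      then show ?thesis using redw_ConsD w Cons by blast
    next
      case False
      have "redw (i # w)" using w i Cons False redw_Cons2[of i j w'] by simp
      then show ?thesis using w i by (intro exI[of _ "i # w"]) (simp add: word_map_Cons)
    qed
  qed
qed

lemma word_map_upper: "(\<forall>m\<in>set w. k < m) \<Longrightarrow> Im z > 0 \<Longrightarrow> Im (word_map c r w z) > 0"
proof (induction w)
  case Nil then show ?case by (simp add: word_map_Nil)
next
  case (Cons i w)
  have "r i \<noteq> 0" using r_pos[of i] Cons.prems by simp
  then show ?case using Cons inv_Im_pos by (simp add: word_map_Cons gen_map_eq)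
qed

lemma word_map_hdist: "(\<forall>m\<in>set w. k < m) \<Longrightarrow> Im z > 0 \<Longrightarrow> Im y > 0 \<Longrightarrow>
    hdist (word_map c r w z) (word_map c r w y) = hdist z y"
proof (induction w)
  case Nil then show ?case by (simp add: word_map_Nil)
next
  case (Cons i w)
  have ri: "r i \<noteq> 0" using r_pos[of i] Cons.prems by simp
  have "Im (word_map c r w z) > 0" "Im (word_map c r w y) > 0" using word_map_upper Cons.prems by auto
  then show ?case using Cons inv_hdist[OF ri] by (simp add: word_map_Cons gen_map_eq)
qed

definition qpt :: "nat list \<Rightarrow> complex" where
  "qpt v = word_map c r (butlast v) (complex_of_real (cc (last v)))"

lemma qpt_Cons: "v \<noteq> [] \<Longrightarrow> qpt (i # v) = gen_map c r i (qpt v)"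
  by (simp add: qpt_def word_map_Cons)

lemma qpt_single: "qpt [i] = complex_of_real (cc i)"
  by (simp add: qpt_def word_map_Nil)

lemma isCont_inv: "z \<noteq> a \<Longrightarrow> isCont (inversion a \<rho>) z"
  unfolding inversion_def by (intro continuous_intros isCont_cnj) auto

lemma closure_image_pt:
  fixes f :: "complex \<Rightarrow> complex"
  assumes "x \<in> closure A" "isCont f x"
  shows "f x \<in> closure (f ` A)"
proof -
  from assms(1)[unfolded closure_sequential] obtain \<sigma> where s: "\<forall>n. \<sigma> n \<in> A" "\<sigma> \<longlonglongrightarrow> x"
    by blast
  have "(\<lambda>n. f (\<sigma> n)) \<longlonglongrightarrow> f x" using isCont_tendsto_compose[OF assms(2) s(2)] .
  moreover have "\<forall>n. f (\<sigma> n) \<in> f ` A" using s(1) by blast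
  ultimately have *: "(\<forall>n. f (\<sigma> n) \<in> f ` A) \<and> (\<lambda>n. f (\<sigma> n)) \<longlonglongrightarrow> f x" by simp
  show ?thesis unfolding closure_sequential by (rule exI[of _ "\<lambda>n. f (\<sigma> n)"]) (use * in simp)
qed

lemma closure_finite_UN:
  assumes "finite F" "x \<in> closure (\<Union>i\<in>F. A i)"
  shows "\<exists>i\<in>F. x \<in> closure (A i)"
  using assms
proof (induction F rule: finite_induct)
  case empty then show ?case by simp
next
  case (insert j F)
  have "x \<in> closure (A j) \<union> closure (\<Union>i\<in>F. A i)" using insert.prems closure_Un by simp
  then show ?case using insert.IH by blast
qed

lemma closure_drop_far:
  assumes "x \<in> closure (A \<union> C)" "C \<inter> ball x e = {}" "e > 0"
  shows "x \<in> closure A"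
proof -
  have "ball x e \<inter> closure C = {}" using assms(2) open_Int_closure_eq_empty[of "ball x e" C]
    by (simp add: Int_commute)
  moreover have "x \<in> ball x e" using assms(3) by simp
  ultimately have "x \<notin> closure C" by blast
  moreover have "x \<in> closure A \<union> closure C" using assms(1) closure_Un by blast
  ultimately show ?thesis by blast
qed

lemma c_inj: "inj_on c {i. i \<ge> 1}"
proof (rule inj_onI)
  fix i j assume ij: "i \<in> {i. i \<ge> 1}" "j \<in> {i. i \<ge> 1}" "c i = c j"
  show "i = j"
  proof (rule ccontr)
    assume "i \<noteq> j"
    then have "B i \<inter> B j = {}" using B_disj ij by auto
    moreover have "complex_of_real (cc i) \<in> B i" using center_in_B[of i] ij(1) by simp
    moreover have "complex_of_real (cc j) \<in> B j" using center_in_B[of j] ij(2) by simp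
    then have "complex_of_real (cc i) \<in> B j" using ij(3) by simp
    ultimately show False by blast
  qed
qed

lemma finite_near: "finite {i. i \<ge> 1 \<and> \<bar>cc i - x\<bar> \<le> T}"
proof -
  have "{i. i \<ge> 1 \<and> \<bar>cc i - x\<bar> \<le> T} \<subseteq> {i \<in> {i. i \<ge> 1}. c i \<in> {\<lfloor>x - T\<rfloor>..\<lceil>x + T\<rceil>}}"
  proof (clarsimp)
    fix i assume "\<bar>real_of_int (c i) - x\<bar> \<le> T"
    then have "x - T \<le> c i" "c i \<le> x + T" by auto
    then show "\<lfloor>x - T\<rfloor> \<le> c i \<and> c i \<le> \<lceil>x + T\<rceil>" by linarith
  qed
  moreover have "finite {i \<in> {i. i \<ge> 1}. c i \<in> {\<lfloor>x - T\<rfloor>..\<lceil>x + T\<rceil>}}"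
    by (rule finite_inverse_image_gen[OF _ c_inj]) simp
  ultimately show ?thesis by (rule finite_subset)
qed

end

locale hset2 = hset +
  fixes R :: real
  assumes Rb: "\<forall>i>k. r i \<le> R"
begin

lemma closure_lemma:
  "\<forall>W S. (\<forall>u\<in>W. redw u \<and> u \<noteq> [] \<and> length u \<le> n \<and> S u \<subseteq> Dset u) \<longrightarrow>
     closure (\<Union>u\<in>W. S u) \<subseteq> (\<Union>u\<in>W. closure (S u)) \<union> qpt ` {v. v \<noteq> []}"
proof (induction n)
  case 0
  show ?case
  proof (intro allI impI)
    fix W :: "nat list set" and S :: "nat list \<Rightarrow> complex set"
    assume "\<forall>u\<in>W. redw u \<and> u \<noteq> [] \<and> length u \<le> 0 \<and> S u \<subseteq> Dset u"
    then have "W = {}" by auto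
    then show "closure (\<Union>u\<in>W. S u) \<subseteq> (\<Union>u\<in>W. closure (S u)) \<union> qpt ` {v. v \<noteq> []}" by simp
  qed
next
  case (Suc n)
  show ?case
  proof (intro allI impI subsetI)
    fix W S x
    assume W: "\<forall>u\<in>W. redw u \<and> u \<noteq> [] \<and> length u \<le> Suc n \<and> S u \<subseteq> Dset u"
      and x: "x \<in> closure (\<Union>u\<in>W. S u)"
    define F where "F = {i. i \<ge> 1 \<and> \<bar>cc i - Re x\<bar> \<le> 1 + R}"
    have finF: "finite F" unfolding F_def by (rule finite_near)
    have hdk: "k < hd u" if "u \<in> W" for u using W that hd_in_set unfolding redw_def by blast
    have SB: "S u \<subseteq> B (hd u)" if "u \<in> W" for u using W that disk_struct by blast
    have far: "(\<Union>u\<in>{u\<in>W. hd u \<notin> F}. S u) \<inter> ball x 1 = {}"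
    proof (rule ccontr)
      assume "(\<Union>u\<in>{u\<in>W. hd u \<notin> F}. S u) \<inter> ball x 1 \<noteq> {}"
      then obtain u z where u: "u \<in> W" "hd u \<notin> F" and z: "z \<in> S u" "dist x z < 1" by auto
      have "z \<in> B (hd u)" using SB u z by blast
      then have "cmod (z - complex_of_real (cc (hd u))) \<le> r (hd u)" unfolding B_def mem_cball_alt .
      moreover have "r (hd u) \<le> R" using Rb hdk u by blast
      moreover have "\<bar>cc (hd u) - Re x\<bar> \<le> cmod (complex_of_real (cc (hd u)) - x)"
      proof -
        have "Re (complex_of_real (cc (hd u)) - x) = cc (hd u) - Re x" by simp
        then show ?thesis using abs_Re_le_cmod[of "complex_of_real (cc (hd u)) - x"] by simp
      qed
      moreover have "cmod (complex_of_real (cc (hd u)) - x) \<le> cmod (z - complex_of_real (cc (hd u))) + dist x z"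
      proof -
        have "complex_of_real (cc (hd u)) - x = (complex_of_real (cc (hd u)) - z) + (z - x)" by simp
        then have "cmod (complex_of_real (cc (hd u)) - x) \<le> cmod (complex_of_real (cc (hd u)) - z) + cmod (z - x)"
          using norm_triangle_ineq by metis
        moreover have "cmod (complex_of_real (cc (hd u)) - z) = cmod (z - complex_of_real (cc (hd u)))"
          by (rule norm_minus_commute)
        moreover have "cmod (z - x) = dist x z" by (simp add: dist_norm norm_minus_commute)
        ultimately show ?thesis by linarith
      qed
      ultimately have "\<bar>cc (hd u) - Re x\<bar> \<le> 1 + R" using z by linarith
      then show False using u hdk[OF u(1)] unfolding F_def by auto
    qed
    have split: "(\<Union>u\<in>W. S u) = (\<Union>i\<in>F. \<Union>u\<in>{u\<in>W. hd u = i}. S u) \<union> (\<Union>u\<in>{u\<in>W. hd u \<notin> F}. S u)"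
      by auto
    have "x \<in> closure (\<Union>i\<in>F. \<Union>u\<in>{u\<in>W. hd u = i}. S u)"
      using closure_drop_far[OF x[unfolded split] far] by simp
    then obtain i where iF: "i \<in> F" and xi: "x \<in> closure (\<Union>u\<in>{u\<in>W. hd u = i}. S u)"
      using closure_finite_UN[OF finF] by blast
    define W' where "W' = {u'. u' \<noteq> [] \<and> i # u' \<in> W}"
    have splitW: "(\<Union>u\<in>{u\<in>W. hd u = i}. S u) = (\<Union>u\<in>{u\<in>W. u = [i]}. S u) \<union> (\<Union>u'\<in>W'. S (i # u'))"
    proof -
      have "{u\<in>W. hd u = i} = {u\<in>W. u = [i]} \<union> (\<lambda>u'. i # u') ` W'"
      proof (intro set_eqI iffI)
        fix u assume "u \<in> {u\<in>W. hd u = i}"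
        then have "u \<in> W" "hd u = i" by auto
        moreover have "u \<noteq> []" using W \<open>u \<in> W\<close> by blast
        ultimately show "u \<in> {u\<in>W. u = [i]} \<union> (\<lambda>u'. i # u') ` W'"
          unfolding W'_def by (cases u) auto
      next
        fix u assume "u \<in> {u\<in>W. u = [i]} \<union> (\<lambda>u'. i # u') ` W'"
        then show "u \<in> {u\<in>W. hd u = i}" unfolding W'_def by auto
      qed
      then show ?thesis by auto
    qed
    show "x \<in> (\<Union>u\<in>W. closure (S u)) \<union> qpt ` {v. v \<noteq> []}"
    proof (cases "x \<in> closure (\<Union>u\<in>{u\<in>W. u = [i]}. S u)")
      case True
      have e: "{u\<in>W. u = [i]} = (if [i] \<in> W then {[i]} else {})" by auto
      have "[i] \<in> W"
      proof (rule ccontr)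
        assume "[i] \<notin> W"
        then have "{u\<in>W. u = [i]} = {}" using e by simp
        then have c0: "closure (\<Union>u\<in>{u\<in>W. u = [i]}. S u) = {}" by (simp only: image_empty Union_empty closure_empty)
        show False using True unfolding c0 by (simp only: empty_iff)
      qed
      then have "closure (\<Union>u\<in>{u\<in>W. u = [i]}. S u) = closure (S [i])"
        by (simp add: Collect_conv_if)
      then show ?thesis using True \<open>[i] \<in> W\<close> by blast
    next
      case False
      then have x2: "x \<in> closure (\<Union>u'\<in>W'. S (i # u'))"
        using xi unfolding splitW closure_Un by blast
      show ?thesis
      proof (cases "W' = {}")
        case True then show ?thesis using x2 by simp
      next
        case False
        then obtain u0 where "u0 \<in> W'" by blast
        then have ki: "k < i" using W unfolding W'_def redw_def by fastforce
        let ?h = "gen_map c r i"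
        define S' where "S' u' = ?h ` S (i # u')" for u'
        have W'prop: "\<forall>u'\<in>W'. redw u' \<and> u' \<noteq> [] \<and> length u' \<le> n \<and> S' u' \<subseteq> Dset u'"
        proof
          fix u' assume u': "u' \<in> W'"
          then have iu: "i # u' \<in> W" "u' \<noteq> []" unfolding W'_def by auto
          have "S' u' \<subseteq> ?h ` Dset (i # u')" unfolding S'_def using W iu by blast
          also have "\<dots> = Dset u'" unfolding Dset_Cons[OF iu(2)] image_comp gen_invol[OF ki] by simp
          finally show "redw u' \<and> u' \<noteq> [] \<and> length u' \<le> n \<and> S' u' \<subseteq> Dset u'"
            using W iu redw_ConsD by fastforce
        qed
        have IH: "closure (\<Union>u'\<in>W'. S' u') \<subseteq> (\<Union>u'\<in>W'. closure (S' u')) \<union> qpt ` {v. v \<noteq> []}"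
          using Suc.IH W'prop by blast
        show ?thesis
        proof (cases "x = complex_of_real (cc i)")
          case True
          then have "x = qpt [i]" by (simp add: qpt_single)
          then show ?thesis by blast
        next
          case xne: False
          have cont: "isCont ?h x" unfolding gen_map_eq using isCont_inv[OF xne] .
          have hh: "?h ` (\<Union>u'\<in>W'. S (i # u')) = (\<Union>u'\<in>W'. S' u')" unfolding S'_def by auto
          have "?h x \<in> closure (\<Union>u'\<in>W'. S' u')"
            using closure_image_pt[OF x2 cont] unfolding hh .
          then have "?h x \<in> (\<Union>u'\<in>W'. closure (S' u')) \<union> qpt ` {v. v \<noteq> []}" using IH by blast
          then show ?thesis
          proof
            assume "?h x \<in> (\<Union>u'\<in>W'. closure (S' u'))"
            then obtain u' where u': "u' \<in> W'" and hx: "?h x \<in> closure (S' u')" by blast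
            have hne: "?h x \<noteq> complex_of_real (cc i)"
            proof
              assume "?h x = complex_of_real (cc i)"
              then have "?h (?h x) = ?h (complex_of_real (cc i))" by simp
              then show False using xne gen_invol'[OF ki] unfolding gen_map_eq by (simp add: inv_at_center)
            qed
            have cont2: "isCont ?h (?h x)" unfolding gen_map_eq using isCont_inv[OF hne[unfolded gen_map_eq]] .
            have "?h (?h x) \<in> closure (?h ` S' u')" using closure_image_pt[OF hx cont2] .
            moreover have "?h ` S' u' = S (i # u')" unfolding S'_def image_comp gen_invol[OF ki] by simp
            ultimately have "x \<in> closure (S (i # u'))" using gen_invol'[OF ki] by simp
            moreover have "i # u' \<in> W" using u' unfolding W'_def by auto
            ultimately show ?thesis by blast
          next
            assume "?h x \<in> qpt ` {v. v \<noteq> []}"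
            then obtain v where v: "v \<noteq> []" "?h x = qpt v" by blast
            have "x = qpt (i # v)" using v gen_invol'[OF ki, of x] qpt_Cons[OF v(1)] by metis
            then show ?thesis by blast
          qed
        qed
      qed
    qed
  qed
qed

end


declare of_real_of_int_eq[simp del]

context hset begin

lemma dist_gt:
  assumes "i \<ge> 1" "j \<ge> 1" "i \<noteq> j"
  shows "\<bar>cc i - cc j\<bar> > r i + r j"
proof (rule ccontr)
  assume "\<not> ?thesis"
  then have le: "\<bar>cc i - cc j\<bar> \<le> r i + r j" by simp
  have ri: "r i > 0" and rj: "r j > 0" using r_pos assms by auto
  define t where "t = r i / (r i + r j)"
  have t0: "0 \<le> t" "t \<le> 1" using ri rj unfolding t_def by auto
  define z where "z = cc i + t * (cc j - cc i)"
  have "z - cc i = t * (cc j - cc i)" unfolding z_def by simp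
  then have "\<bar>z - cc i\<bar> = t * \<bar>cc i - cc j\<bar>" using t0 by (simp add: abs_mult abs_minus_commute)
  also have "\<dots> \<le> t * (r i + r j)" using le t0 by (simp add: mult_left_mono)
  also have "\<dots> = r i" unfolding t_def using ri rj by simp
  finally have zi: "\<bar>z - cc i\<bar> \<le> r i" .
  have "z - cc j = (1 - t) * (cc i - cc j)" unfolding z_def by (simp add: algebra_simps)
  then have "\<bar>z - cc j\<bar> = (1 - t) * \<bar>cc i - cc j\<bar>" using t0 by (simp add: abs_mult)
  also have "\<dots> \<le> (1 - t) * (r i + r j)" using le t0 by (simp add: mult_left_mono)
  also have "\<dots> = r j" unfolding t_def using ri rj by (simp add: field_simps)
  finally have zj: "\<bar>z - cc j\<bar> \<le> r j" .
  have e: "\<And>a. cmod (complex_of_real z - complex_of_real a) = \<bar>z - a\<bar>"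
    by (metis norm_of_real of_real_diff)
  have "complex_of_real z \<in> B i" "complex_of_real z \<in> B j"
    unfolding B_def mem_cball_alt e using zi zj by auto
  then show False using B_disj assms by blast
qed

definition lam :: "nat \<Rightarrow> nat \<Rightarrow> real" where
  "lam i j = r i / (\<bar>cc i - cc j\<bar> - r j)"

lemma lam_bounds:
  assumes "i \<ge> 1" "j \<ge> 1" "i \<noteq> j"
  shows "0 \<le> lam i j" "lam i j < 1"
proof -
  have d: "\<bar>cc i - cc j\<bar> - r j > r i" using dist_gt[OF assms] by simp
  have ri: "r i > 0" using r_pos assms by auto
  show "0 \<le> lam i j" unfolding lam_def using d ri by simp
  show "lam i j < 1" unfolding lam_def using d ri by simp
qed

end

locale hset3 = hset2 +
  assumes small: "\<forall>\<eta>>0. finite {i. k < i \<and> \<eta> \<le> r i}"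
begin

lemma denom_ge:
  assumes "i \<ge> 1" "j \<ge> 1" "i \<noteq> j"
  shows "\<bar>cc i - cc j\<bar> - r j \<ge> real_of_int (\<lfloor>r j\<rfloor> + 1) - r j"
proof -
  have "\<bar>cc i - cc j\<bar> > r j" using dist_gt[OF assms] r_pos[OF assms(1)] by linarith
  moreover have ab: "\<bar>cc i - cc j\<bar> = real_of_int \<bar>c i - c j\<bar>" by simp
  ultimately have "r j < real_of_int \<bar>c i - c j\<bar>" by linarith
  then have "\<lfloor>r j\<rfloor> < \<bar>c i - c j\<bar>" by (rule floor_less_iff[THEN iffD2])
  then have "\<lfloor>r j\<rfloor> + 1 \<le> \<bar>c i - c j\<bar>" by simp
  then have "real_of_int (\<lfloor>r j\<rfloor> + 1) \<le> real_of_int \<bar>c i - c j\<bar>"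
    by (simp only: of_int_le_iff)
  then have "real_of_int (\<lfloor>r j\<rfloor> + 1) \<le> \<bar>cc i - cc j\<bar>" unfolding ab .
  then show ?thesis by simp
qed

lemma q_exists: "\<exists>q. 0 \<le> q \<and> q < 1 \<and> (\<forall>i j. k < i \<longrightarrow> k < j \<longrightarrow> i \<noteq> j \<longrightarrow> lam i j \<le> q)"
proof -
  define ee where "ee j = real_of_int (\<lfloor>r j\<rfloor> + 1) - r j" for j
  have eepos: "ee j > 0" for j unfolding ee_def by linarith
  define F0 where "F0 = {j. k < j \<and> 1/4 \<le> r j}"
  have finF0: "finite F0" unfolding F0_def by (rule small[rule_format]) simp
  define e where "e = Min (insert (3/4) (ee ` F0))"
  have epos: "e > 0" unfolding e_def using finF0 eepos by (subst Min_gr_iff) auto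
  have e_le: "e \<le> ee j" if "k < j" for j
  proof (cases "j \<in> F0")
    case True then show ?thesis unfolding e_def using finF0 by (intro Min_le) auto
  next
    case False
    then have "r j < 1/4" using that unfolding F0_def by auto
    moreover have "r j > 0" using r_pos that by auto
    ultimately have "\<lfloor>r j\<rfloor> = 0" by (simp add: floor_eq_iff)
    then have "ee j = 1 - r j" unfolding ee_def by simp
    also have "\<dots> \<ge> 3/4" using \<open>r j < 1/4\<close> by simp
    finally have "3/4 \<le> ee j" .
    moreover have "e \<le> 3/4" unfolding e_def using finF0 by (intro Min_le) auto
    ultimately show ?thesis by linarith
  qed
  have dge: "\<bar>cc i - cc j\<bar> - r j \<ge> e" if "k < i" "k < j" "i \<noteq> j" for i j
  proof -
    have "i \<ge> 1" "j \<ge> 1" using that by auto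
    then have "\<bar>cc i - cc j\<bar> - r j \<ge> ee j" using denom_ge[of i j] that(3) unfolding ee_def by blast
    then show ?thesis using e_le[OF that(2)] by linarith
  qed
  define F1 where "F1 = {i. k < i \<and> e/2 \<le> r i}"
  have finF1: "finite F1" unfolding F1_def by (rule small[rule_format]) (use epos in simp)
  define M where "M = Max (insert 0 ((\<lambda>i. \<bar>cc i\<bar>) ` F1))"
  have M: "\<bar>cc i\<bar> \<le> M" if "i \<in> F1" for i unfolding M_def using finF1 that by (intro Max_ge) auto
  define F2 where "F2 = {j. j \<ge> 1 \<and> \<bar>cc j - 0\<bar> \<le> M + 3 * R}"
  have finF2: "finite F2" unfolding F2_def by (rule finite_near)
  define X where "X = {p \<in> F1 \<times> F2. k < fst p \<and> k < snd p \<and> fst p \<noteq> snd p}"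
  have finX: "finite X" unfolding X_def using finF1 finF2 by simp
  define q where "q = Max (insert (1/2) ((\<lambda>p. lam (fst p) (snd p)) ` X))"
  have q0: "0 \<le> q" unfolding q_def using finX by (subst Max_ge_iff) auto
  have q1: "q < 1" unfolding q_def using finX lam_bounds X_def
    by (subst Max_less_iff) auto
  have "lam i j \<le> q" if ij: "k < i" "k < j" "i \<noteq> j" for i j
  proof (cases "(i, j) \<in> X")
    case True
    then have "lam i j \<in> (\<lambda>p. lam (fst p) (snd p)) ` X" by force
    then show ?thesis unfolding q_def using finX by (intro Max_ge) auto
  next
    case False
    have "lam i j \<le> 1/2"
    proof (rule ccontr)
      assume "\<not> lam i j \<le> 1/2"
      then have lg: "lam i j > 1/2" by simp
      have dpos: "\<bar>cc i - cc j\<bar> - r j > 0" using dge[OF ij] epos by linarith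
      have ri2: "2 * r i > \<bar>cc i - cc j\<bar> - r j" using lg dpos unfolding lam_def
        by (simp add: field_simps)
      then have "r i \<ge> e/2" using dge[OF ij] by linarith
      then have iF1: "i \<in> F1" unfolding F1_def using ij by simp
      have "r i \<le> R" "r j \<le> R" using Rb ij by auto
      then have "\<bar>cc i - cc j\<bar> \<le> 3 * R" using ri2 by linarith
      then have "\<bar>cc j - 0\<bar> \<le> M + 3 * R" using M[OF iF1] by linarith
      then have "j \<in> F2" unfolding F2_def using ij by simp
      then have "(i, j) \<in> X" unfolding X_def using iF1 ij by simp
      then show False using False by simp
    qed
    moreover have "1/2 \<le> q" unfolding q_def using finX by (intro Max_ge) auto
    ultimately show ?thesis by linarith
  qed
  then show ?thesis using q0 q1 by blast
qed

end


declare of_real_of_int_eq[simp del]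

context hset begin

lemma base_change:
  assumes z0: "Im z0 > 0" and z1: "Im z1 > 0"
  shows "limit_set (gen_by {gen_map c r i | i. k < i}) z0 \<subseteq> limit_set (gen_by {gen_map c r i | i. k < i}) z1"
proof
  let ?G = "gen_by {gen_map c r i | i. k < i}"
  fix x assume "x \<in> limit_set ?G z0"
  then have lim: "complex_of_real x islimpt (\<lambda>g. g z0) ` ?G" unfolding limit_set_def by simp
  define X where "X = complex_of_real x"
  define d where "d = hdist z0 z1"
  have d0: "d \<ge> 0" unfolding d_def hdist_def using z0 z1 by simp
  have "X islimpt (\<lambda>g. g z1) ` ?G"
    unfolding islimpt_approachable
  proof (intro allI impI)
    fix e :: real assume e: "e > 0"
    define ep where "ep = e / (2 + d)"
    have ep: "ep > 0" unfolding ep_def using e d0 by simp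
    obtain y where y: "y \<in> (\<lambda>g. g z0) ` ?G" "y \<noteq> X" "dist y X < ep"
      using lim[unfolded islimpt_approachable] ep unfolding X_def by blast
    then obtain g where g: "g \<in> ?G" "y = g z0" by blast
    then obtain w where w: "redw w" "g = word_map c r w" using gen_by_word by blast
    have lw: "\<forall>m\<in>set w. k < m" using w(1) unfolding redw_def by simp
    define y1 where "y1 = g z1"
    define a where "a = Im y"
    define b where "b = Im y1"
    have a0: "a > 0" unfolding a_def using g w word_map_upper[OF lw z0] by simp
    have b0: "b > 0" unfolding b_def y1_def using w word_map_upper[OF lw z1] by simp
    have hd: "hdist y y1 = d" unfolding d_def y1_def g(2) w(2) using word_map_hdist[OF lw z0 z1] .
    have cm: "(cmod (y - y1))\<^sup>2 = d * a * b"
      using hd a0 b0 unfolding hdist_def a_def[symmetric] b_def[symmetric] by (simp add: field_simps)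
    have "a = Im (y - X)" unfolding a_def X_def by simp
    also have "\<dots> \<le> cmod (y - X)" using abs_Im_le_cmod[of "y - X"] by linarith
    also have "\<dots> < ep" using y(3) by (simp add: dist_norm)
    finally have aep: "a < ep" .
    have "\<bar>Im (y1 - y)\<bar> \<le> cmod (y1 - y)" by (rule abs_Im_le_cmod)
    then have "\<bar>Im (y1 - y)\<bar>\<^sup>2 \<le> (cmod (y1 - y))\<^sup>2"
      by (rule power_mono) simp
    then have "(Im (y1 - y))\<^sup>2 \<le> (cmod (y1 - y))\<^sup>2" by simp
    then have "(b - a)\<^sup>2 \<le> d * a * b" using cm unfolding a_def b_def by (simp add: norm_minus_commute)
    moreover have "(b - a)\<^sup>2 = b * b - 2 * (a * b) + a * a" by (simp add: power2_eq_square algebra_simps)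
    moreover have "a * a \<ge> 0" by simp
    moreover have "d * a * b = d * (a * b)" by simp
    ultimately have "b * b \<le> 2 * (a * b) + d * (a * b)" by linarith
    then have "b * b \<le> ((2 + d) * a) * b" by (simp add: algebra_simps)
    then have ba: "b \<le> (2 + d) * a" using b0 by (rule mult_right_le_imp_le)
    have nm: "cmod (y1 - y) = cmod (y - y1)" by (rule norm_minus_commute)
    have da: "0 \<le> d * a" using d0 a0 by simp
    have "(cmod (y1 - y))\<^sup>2 = d * a * b" unfolding nm cm ..
    also have "\<dots> \<le> d * a * ((2 + d) * a)" using ba da by (rule mult_left_mono)
    finally have "(cmod (y1 - y))\<^sup>2 \<le> d * a * ((2 + d) * a)" .
    also have "\<dots> \<le> ((1 + d) * a)\<^sup>2"
    proof -
      have "((1 + d) * a)\<^sup>2 = d * a * ((2 + d) * a) + a * a" unfolding power2_eq_square by algebra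
      moreover have "a * a \<ge> 0" by simp
      ultimately show ?thesis by linarith
    qed
    finally have sq: "(cmod (y1 - y))\<^sup>2 \<le> ((1 + d) * a)\<^sup>2" .
    have "0 \<le> (1 + d) * a" using a0 d0 by simp
    with sq have "cmod (y1 - y) \<le> (1 + d) * a" by (rule power2_le_imp_le)
    also have "\<dots> < (1 + d) * ep" using aep d0 by simp
    finally have c1: "cmod (y1 - y) < (1 + d) * ep" .
    have "dist y1 X \<le> dist y1 y + dist y X" by (rule dist_triangle)
    then have "dist y1 X \<le> cmod (y1 - y) + dist y X" by (simp only: dist_norm)
    also have "\<dots> < (1 + d) * ep + ep" using c1 y(3) by simp
    also have "\<dots> = (2 + d) * ep" by algebra
    also have "\<dots> = e" unfolding ep_def using d0 by simp
    finally have "dist y1 X < e" .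
    moreover have "y1 \<noteq> X" using b0 unfolding b_def X_def by auto
    moreover have "y1 \<in> (\<lambda>g. g z1) ` ?G" unfolding y1_def using g by blast
    ultimately show "\<exists>x'\<in>(\<lambda>g. g z1) ` ?G. x' \<noteq> X \<and> dist x' X < e" by blast
  qed
  then show "x \<in> limit_set ?G z1" unfolding limit_set_def X_def by simp
qed

end

context hset3 begin

definition qq :: real where
  "qq = (SOME q. 0 \<le> q \<and> q < 1 \<and> (\<forall>i j. k < i \<longrightarrow> k < j \<longrightarrow> i \<noteq> j \<longrightarrow> lam i j \<le> q))"

lemma qq: "0 \<le> qq" "qq < 1" "\<And>i j. k < i \<Longrightarrow> k < j \<Longrightarrow> i \<noteq> j \<Longrightarrow> lam i j \<le> qq"
proof -
  have "0 \<le> qq \<and> qq < 1 \<and> (\<forall>i j. k < i \<longrightarrow> k < j \<longrightarrow> i \<noteq> j \<longrightarrow> lam i j \<le> qq)"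
    unfolding qq_def using q_exists by (rule someI_ex)
  then show "0 \<le> qq" "qq < 1" "\<And>i j. k < i \<Longrightarrow> k < j \<Longrightarrow> i \<noteq> j \<Longrightarrow> lam i j \<le> qq" by auto
qed

lemma rad_bound: "redw u \<Longrightarrow> u \<noteq> [] \<Longrightarrow> snd (wcr u) \<le> R * (qq\<^sup>2) ^ (length u - 1)"
proof (induction u rule: wcr.induct)
  case 1 then show ?case by simp
next
  case (2 i)
  then have "k < i" by (simp add: redw_def)
  then show ?case using Rb by simp
next
  case (3 i j u)
  have red: "redw (j # u)" and ij: "i \<noteq> j" and ki: "k < i" using "3.prems" redw_Cons2 by auto
  have kj: "k < j" using red by (simp add: redw_def)
  have IH: "snd (wcr (j # u)) \<le> R * (qq\<^sup>2) ^ (length (j # u) - 1)" using "3.IH"[OF red] by simp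
  have s0: "0 \<le> snd (wcr (j # u))" using disk_struct[OF red] by simp
  have l0: "0 \<le> lam i j" "lam i j \<le> qq" using lam_bounds[of i j] qq(3)[OF ki kj ij] ki kj ij by auto
  have "lam i j ^ 2 \<le> qq\<^sup>2" using l0 by (simp add: power_mono)
  have "snd (wcr (i # j # u)) \<le> (lam i j)\<^sup>2 * snd (wcr (j # u))"
    using decay[OF "3.prems"(1)] unfolding lam_def .
  also have "\<dots> \<le> qq\<^sup>2 * snd (wcr (j # u))"
    using \<open>lam i j ^ 2 \<le> qq\<^sup>2\<close> s0 by (rule mult_right_mono)
  also have "\<dots> \<le> qq\<^sup>2 * (R * (qq\<^sup>2) ^ (length (j # u) - 1))"
    using IH by (rule mult_left_mono) simp
  also have "\<dots> = R * (qq\<^sup>2) ^ (length (i # j # u) - 1)" by simp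
  finally show ?case .
qed

lemma limit_cover:
  assumes g: "good z1" and z1: "Im z1 > 0" and n: "1 \<le> n"
  shows "limit_set (gen_by {gen_map c r i | i. k < i}) z1 \<subseteq>
    {x. \<exists>u. redw u \<and> length u = n \<and> \<bar>x - fst (wcr u)\<bar> \<le> snd (wcr u)} \<union>
    {x. complex_of_real x \<in> qpt ` {v. v \<noteq> []}}"
proof
  fix x assume "x \<in> limit_set (gen_by {gen_map c r i | i. k < i}) z1"
  then have lim: "complex_of_real x islimpt (\<lambda>g. g z1) ` gen_by {gen_map c r i | i. k < i}"
    unfolding limit_set_def by simp
  define W where "W = {u. redw u \<and> 1 \<le> length u \<and> length u \<le> n}"
  define S where "S u = (if length u = n then Dset u else {word_map c r u z1})" for u
  have WS: "\<forall>u\<in>W. redw u \<and> u \<noteq> [] \<and> length u \<le> n \<and> S u \<subseteq> Dset u"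
  proof
    fix u assume u: "u \<in> W"
    then have "redw u" "1 \<le> length u" "length u \<le> n" unfolding W_def by auto
    moreover have "word_map c r u z1 \<in> Dset u"
      using orbit_in_D[OF g \<open>redw u\<close> \<open>1 \<le> length u\<close> order_refl] by simp
    ultimately show "redw u \<and> u \<noteq> [] \<and> length u \<le> n \<and> S u \<subseteq> Dset u" unfolding S_def by auto
  qed
  have orb: "(\<lambda>g. g z1) ` gen_by {gen_map c r i | i. k < i} \<subseteq> insert z1 (\<Union>u\<in>W. S u)"
  proof
    fix y assume "y \<in> (\<lambda>g. g z1) ` gen_by {gen_map c r i | i. k < i}"
    then obtain g where "g \<in> gen_by {gen_map c r i | i. k < i}" "y = g z1" by blast
    then obtain w where w: "redw w" "y = word_map c r w z1" using gen_by_word by blast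
    show "y \<in> insert z1 (\<Union>u\<in>W. S u)"
    proof (cases "w = []")
      case True then show ?thesis using w by (simp add: word_map_Nil)
    next
      case False
      show ?thesis
      proof (cases "length w < n")
        case True
        then have "w \<in> W" "y \<in> S w" unfolding W_def S_def using w False by (auto simp: Suc_le_eq)
        then show ?thesis by blast
      next
        case ge: False
        have "y \<in> Dset (take n w)" using orbit_in_D[OF g w(1) n] ge w(2) by simp
        moreover have "take n w \<in> W" unfolding W_def using redw_append[of "take n w" "drop n w"] w(1) ge n
          by simp
        moreover have "length (take n w) = n" using ge by simp
        ultimately show ?thesis unfolding S_def by force
      qed
    qed
  qed
  have "complex_of_real x islimpt (\<Union>u\<in>W. S u)"
    using islimpt_subset[OF lim orb] islimpt_insert by blast
  then have "complex_of_real x \<in> closure (\<Union>u\<in>W. S u)"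
    by (simp add: closure_def)
  then have "complex_of_real x \<in> (\<Union>u\<in>W. closure (S u)) \<union> qpt ` {v. v \<noteq> []}"
    using closure_lemma[of n] WS by blast
  then show "x \<in> {x. \<exists>u. redw u \<and> length u = n \<and> \<bar>x - fst (wcr u)\<bar> \<le> snd (wcr u)} \<union>
    {x. complex_of_real x \<in> qpt ` {v. v \<noteq> []}}"
  proof
    assume "complex_of_real x \<in> (\<Union>u\<in>W. closure (S u))"
    then obtain u where u: "u \<in> W" "complex_of_real x \<in> closure (S u)" by blast
    have ru: "redw u" "u \<noteq> []" using u WS by auto
    show ?thesis
    proof (cases "length u = n")
      case True
      then have "S u = cball (complex_of_real (fst (wcr u))) (snd (wcr u))"
        unfolding S_def using disk_struct[OF ru] by simp
      then have "complex_of_real x \<in> cball (complex_of_real (fst (wcr u))) (snd (wcr u))"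
        using u(2) by simp
      then have "cmod (complex_of_real x - complex_of_real (fst (wcr u))) \<le> snd (wcr u)"
        unfolding mem_cball_alt .
      moreover have "cmod (complex_of_real x - complex_of_real (fst (wcr u))) = \<bar>x - fst (wcr u)\<bar>"
        by (metis norm_of_real of_real_diff)
      ultimately show ?thesis using ru True by auto
    next
      case False
      then have "complex_of_real x = word_map c r u z1" using u(2) unfolding S_def by simp
      moreover have "Im (word_map c r u z1) > 0" using word_map_upper ru z1 unfolding redw_def by blast
      ultimately have False by (metis Im_complex_of_real less_irrefl)
      then show ?thesis by simp
    qed
  next
    assume "complex_of_real x \<in> qpt ` {v. v \<noteq> []}"
    then show ?thesis by simp
  qed
qed

end


declare of_real_of_int_eq[simp del]

lemma suminf_ennreal_infsum:
  fixes f :: "nat \<Rightarrow> ennreal"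
  shows "(\<Sum>j. f j) = infsum f UNIV"
proof -
  have "f summable_on UNIV" by (rule nonneg_summable_on_complete) simp
  then have "(f has_sum infsum f UNIV) UNIV" by (rule has_sum_infsum)
  then have "f sums infsum f UNIV" by (rule has_sum_imp_sums)
  then show ?thesis by (rule sums_unique[symmetric])
qed

lemma cover_sum:
  fixes RW :: "nat list set" and I :: "nat list \<Rightarrow> real set" and qr :: "nat list \<Rightarrow> real" and s :: real
  assumes s: "s > 0" and dI: "\<And>u. u \<in> RW \<Longrightarrow> diameter (I u) = dI u"
  defines "U \<equiv> \<lambda>j. (if even j then (if j div 2 \<in> to_nat ` RW then I (from_nat (j div 2)) else {})
                     else {qr (from_nat (j div 2))})"
  shows "(\<Sum>j. ennreal (diameter (U j) powr s)) = infsum (\<lambda>u. ennreal (dI u powr s)) RW"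
    and "(\<Union>u\<in>RW. I u) \<union> range qr \<subseteq> (\<Union>j. U j)"
proof -
  define f where "f j = ennreal (diameter (U j) powr s)" for j
  define h where "h u = 2 * to_nat u" for u :: "nat list"
  have "(\<Sum>j. f j) = infsum f UNIV" by (rule suminf_ennreal_infsum)
  also have "\<dots> = infsum f (h ` RW)"
  proof (rule infsum_cong_neutral)
    fix x assume x: "x \<in> UNIV - h ` RW"
    show "f x = 0"
    proof (cases "even x")
      case True
      have "x div 2 \<notin> to_nat ` RW"
      proof
        assume "x div 2 \<in> to_nat ` RW"
        then obtain u where "u \<in> RW" "x div 2 = to_nat u" by blast
        then have "x = h u" unfolding h_def using even_two_times_div_two[OF True] by simp
        then show False using x \<open>u \<in> RW\<close> by blast
      qed
      then show ?thesis unfolding f_def U_def using True s by simp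
    next
      case False
      then show ?thesis unfolding f_def U_def using s by simp
    qed
  qed auto
  also have "\<dots> = infsum (f \<circ> h) RW"
  proof (rule infsum_reindex)
    show "inj_on h RW" unfolding h_def using inj_to_nat by (auto simp: inj_on_def inj_def)
  qed
  also have "\<dots> = infsum (\<lambda>u. ennreal (dI u powr s)) RW"
  proof (rule infsum_cong)
    fix u assume u: "u \<in> RW"
    have "U (h u) = I u" unfolding U_def h_def using u by simp
    then show "(f \<circ> h) u = ennreal (dI u powr s)" unfolding f_def using dI[OF u] by simp
  qed
  finally show "(\<Sum>j. ennreal (diameter (U j) powr s)) = infsum (\<lambda>u. ennreal (dI u powr s)) RW"
    unfolding f_def .
  show "(\<Union>u\<in>RW. I u) \<union> range qr \<subseteq> (\<Union>j. U j)"
  proof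
    fix x assume "x \<in> (\<Union>u\<in>RW. I u) \<union> range qr"
    then show "x \<in> (\<Union>j. U j)"
    proof
      assume "x \<in> (\<Union>u\<in>RW. I u)"
      then obtain u where u: "u \<in> RW" "x \<in> I u" by blast
      have "U (2 * to_nat u) = I u" unfolding U_def using u by simp
      then show ?thesis using u by blast
    next
      assume "x \<in> range qr"
      then obtain v where v: "x = qr v" by blast
      have "U (2 * to_nat v + 1) = {qr v}" unfolding U_def by simp
      then show ?thesis using v by blast
    qed
  qed
qed

context hset3 begin

lemma ennreal_summable: "(f :: 'a \<Rightarrow> ennreal) summable_on A"
  by (rule nonneg_summable_on_complete) simp

lemma infsum_cmult_le:
  fixes f :: "'a \<Rightarrow> ennreal" and C :: ennreal
  shows "(\<Sum>\<^sub>\<infinity>u\<in>A. C * f u) \<le> C * (\<Sum>\<^sub>\<infinity>u\<in>A. f u)"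
proof (rule infsum_le_finite_sums[OF ennreal_summable])
  fix F assume F: "finite F" "F \<subseteq> A"
  have "sum f F = infsum f F" using F by simp
  also have "\<dots> \<le> infsum f A"
    by (rule infsum_mono_neutral[OF ennreal_summable ennreal_summable]) (use F in auto)
  finally have "sum f F \<le> infsum f A" .
  then have "C * sum f F \<le> C * infsum f A" by (rule mult_left_mono) simp
  then show "(\<Sum>u\<in>F. C * f u) \<le> C * (\<Sum>\<^sub>\<infinity>u\<in>A. f u)" by (simp add: sum_distrib_left)
qed

lemma haus_zero:
  fixes \<alpha> s :: real and z1 :: complex and \<Lambda> :: "real set"
  assumes alpha: "\<alpha> > 0" and sa: "s > \<alpha>"
    and S1: "(\<Sum>\<^sub>\<infinity>i\<in>{k<..}. ennreal (r i powr \<alpha>)) < \<infinity>"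
    and Tle: "\<forall>n\<ge>1. (\<Sum>\<^sub>\<infinity>w\<in>reduced_words k n. ennreal (word_radius c r w powr \<alpha>))
                  \<le> (\<Sum>\<^sub>\<infinity>i\<in>{k<..}. ennreal (r i powr \<alpha>))"
    and g: "good z1" and z1: "Im z1 > 0"
    and Lam: "\<Lambda> \<subseteq> limit_set (gen_by {gen_map c r i | i. k < i}) z1"
  shows "hausdorff_measure s \<Lambda> = 0"
proof -
  have s0: "s > 0" using alpha sa by simp
  obtain S1r where S1r: "(\<Sum>\<^sub>\<infinity>i\<in>{k<..}. ennreal (r i powr \<alpha>)) = ennreal S1r" "0 \<le> S1r"
    using S1 by (cases "(\<Sum>\<^sub>\<infinity>i\<in>{k<..}. ennreal (r i powr \<alpha>))" rule: ennreal_cases) auto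
  have pre0: "hausdorff_pre s \<delta> \<Lambda> = 0" if \<delta>: "\<delta> > 0" for \<delta>
  proof -
    have "hausdorff_pre s \<delta> \<Lambda> \<le> 0 + ennreal \<epsilon>" if \<epsilon>: "\<epsilon> > 0" for \<epsilon>
    proof -
      define C where "C = 2 powr s * (S1r + 1)"
      have C: "C > 0" unfolding C_def using S1r(2) by simp
      define \<tau>0 where "\<tau>0 = (\<epsilon> / C) powr (1 / (s - \<alpha>))"
      have \<tau>0: "\<tau>0 > 0" unfolding \<tau>0_def using \<epsilon> C by simp
      define \<tau> where "\<tau> = min \<delta> \<tau>0"
      have \<tau>: "\<tau> > 0" "\<tau> \<le> \<delta>" "\<tau> \<le> \<tau>0" unfolding \<tau>_def using \<tau>0 \<delta> by auto
      have "\<tau> powr (s - \<alpha>) \<le> \<tau>0 powr (s - \<alpha>)" using \<tau> sa by (intro powr_mono2) auto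
      also have "\<dots> = (\<epsilon> / C) powr ((1 / (s - \<alpha>)) * (s - \<alpha>))" unfolding \<tau>0_def by (rule powr_powr)
      also have "\<dots> = \<epsilon> / C" using sa \<epsilon> C by simp
      finally have taupow: "\<tau> powr (s - \<alpha>) \<le> \<epsilon> / C" .
      define K where "K = \<tau> / (2 * (\<bar>R\<bar> + 1))"
      have K: "K > 0" unfolding K_def using \<tau> by simp
      have "(\<lambda>m. (qq\<^sup>2) ^ m) \<longlonglongrightarrow> 0"
        by (rule LIMSEQ_abs_realpow_zero2) (use qq in \<open>simp add: power_less_one_iff abs_less_iff\<close>)
      then have "eventually (\<lambda>m. (qq\<^sup>2) ^ m < K) sequentially" using K by (rule order_tendstoD)
      then obtain m where m: "(qq\<^sup>2) ^ m < K" by (meson eventually_sequentially order_refl)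
      define n where "n = Suc m"
      define RW where "RW = reduced_words k n"
      have RWp: "redw u \<and> length u = n \<and> u \<noteq> []" if "u \<in> RW" for u
        using that unfolding RW_def reduced_words_eq n_def by auto
      have rho: "snd (wcr u) \<le> \<tau> / 2" "0 < snd (wcr u)" if "u \<in> RW" for u
      proof -
        have "snd (wcr u) \<le> R * (qq\<^sup>2) ^ (length u - 1)" using rad_bound RWp[OF that] by blast
        also have "\<dots> = R * (qq\<^sup>2) ^ m" using RWp[OF that] unfolding n_def by simp
        also have "\<dots> \<le> (\<bar>R\<bar> + 1) * (qq\<^sup>2) ^ m" by (intro mult_right_mono) auto
        also have "\<dots> \<le> (\<bar>R\<bar> + 1) * K" using m by (intro mult_left_mono) auto
        also have "\<dots> = \<tau> / 2" unfolding K_def by (simp add: field_simps)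
        finally show "snd (wcr u) \<le> \<tau> / 2" .
        show "0 < snd (wcr u)" using disk_struct RWp[OF that] by blast
      qed
      define I where "I u = {fst (wcr u) - snd (wcr u) .. fst (wcr u) + snd (wcr u)}" for u
      define qr where "qr v = Re (qpt v)" for v
      define dI where "dI u = 2 * snd (wcr u)" for u
      have dI: "diameter (I u) = dI u" if "u \<in> RW" for u
        unfolding I_def dI_def using rho(2)[OF that] by (simp add: diameter_closed_interval)
      define U where "U \<equiv> \<lambda>j. (if even j then (if j div 2 \<in> to_nat ` RW then I (from_nat (j div 2)) else {})
                     else {qr (from_nat (j div 2))})"
      note cs = cover_sum[where qr=qr and RW=RW and I=I and dI=dI, OF s0 dI]
      have cov: "\<Lambda> \<subseteq> (\<Union>j. U j)"
      proof -
        have "\<Lambda> \<subseteq> {x. \<exists>u. redw u \<and> length u = n \<and> \<bar>x - fst (wcr u)\<bar> \<le> snd (wcr u)} \<union>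
             {x. complex_of_real x \<in> qpt ` {v. v \<noteq> []}}"
          using Lam limit_cover[OF g z1, of n] unfolding n_def by auto
        also have "\<dots> \<subseteq> (\<Union>u\<in>RW. I u) \<union> range qr"
        proof
          fix x assume "x \<in> {x. \<exists>u. redw u \<and> length u = n \<and> \<bar>x - fst (wcr u)\<bar> \<le> snd (wcr u)} \<union>
             {x. complex_of_real x \<in> qpt ` {v. v \<noteq> []}}"
          then show "x \<in> (\<Union>u\<in>RW. I u) \<union> range qr"
          proof
            assume "x \<in> {x. \<exists>u. redw u \<and> length u = n \<and> \<bar>x - fst (wcr u)\<bar> \<le> snd (wcr u)}"
            then obtain u where u: "redw u" "length u = n" "\<bar>x - fst (wcr u)\<bar> \<le> snd (wcr u)" by blast
            then have "u \<in> RW" unfolding RW_def reduced_words_eq by simp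
            moreover have "x \<in> I u" unfolding I_def using u(3) by auto
            ultimately show ?thesis by blast
          next
            assume "x \<in> {x. complex_of_real x \<in> qpt ` {v. v \<noteq> []}}"
            then obtain v where "complex_of_real x = qpt v" by blast
            then have "x = qr v" unfolding qr_def by (metis Re_complex_of_real)
            then show ?thesis by blast
          qed
        qed
        also have "\<dots> \<subseteq> (\<Union>j. U j)" unfolding U_def by (rule cs(2))
        finally show ?thesis .
      qed
      have adm: "bounded (U j) \<and> diameter (U j) \<le> \<delta>" for j
      proof (cases "even j")
        case True
        show ?thesis
        proof (cases "j div 2 \<in> to_nat ` RW")
          case True2: True
          then obtain u where u: "u \<in> RW" "j div 2 = to_nat u" by blast
          then have "U j = I u" unfolding U_def using True by simp
          moreover have "diameter (I u) \<le> \<delta>" using dI[OF u(1)] rho[OF u(1)] \<tau> unfolding dI_def by simp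
          moreover have "bounded (I u)" unfolding I_def by simp
          ultimately show ?thesis by simp
        next
          case False
          then show ?thesis unfolding U_def using True \<delta> by simp
        qed
      next
        case False
        then show ?thesis unfolding U_def using \<delta> by simp
      qed
      have "hausdorff_pre s \<delta> \<Lambda> \<le> (\<Sum>j. ennreal (diameter (U j) powr s))"
        unfolding hausdorff_pre_def using cov adm by (intro INF_lower) auto
      also have "\<dots> = (\<Sum>\<^sub>\<infinity>u\<in>RW. ennreal (dI u powr s))" unfolding U_def by (rule cs(1))
      also have "\<dots> \<le> (\<Sum>\<^sub>\<infinity>u\<in>RW. ennreal (2 powr s * \<tau> powr (s - \<alpha>)) * ennreal (word_radius c r u powr \<alpha>))"
      proof (rule infsum_mono[OF ennreal_summable ennreal_summable])
        fix u assume u: "u \<in> RW"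
        define \<rho> where "\<rho> = snd (wcr u)"
        have \<rho>: "0 < \<rho>" "\<rho> \<le> \<tau>" using rho[OF u] \<tau> unfolding \<rho>_def by auto
        have wr: "word_radius c r u = \<rho>" unfolding \<rho>_def using word_radius_eq RWp[OF u] by blast
        have "dI u powr s = 2 powr s * \<rho> powr s" unfolding dI_def \<rho>_def[symmetric] using \<rho> by (simp add: powr_mult)
        also have "\<rho> powr s = \<rho> powr \<alpha> * \<rho> powr (s - \<alpha>)" by (simp add: powr_add[symmetric])
        also have "\<rho> powr (s - \<alpha>) \<le> \<tau> powr (s - \<alpha>)" using \<rho> sa by (intro powr_mono2) auto
        then have "2 powr s * (\<rho> powr \<alpha> * \<rho> powr (s - \<alpha>)) \<le> 2 powr s * (\<rho> powr \<alpha> * \<tau> powr (s - \<alpha>))"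
          by (intro mult_left_mono) auto
        finally have "dI u powr s \<le> (2 powr s * \<tau> powr (s - \<alpha>)) * \<rho> powr \<alpha>" by (simp add: algebra_simps)
        then have "ennreal (dI u powr s) \<le> ennreal ((2 powr s * \<tau> powr (s - \<alpha>)) * \<rho> powr \<alpha>)"
          by (rule ennreal_leI)
        also have "\<dots> = ennreal (2 powr s * \<tau> powr (s - \<alpha>)) * ennreal (\<rho> powr \<alpha>)"
          by (rule ennreal_mult) auto
        finally show "ennreal (dI u powr s) \<le> ennreal (2 powr s * \<tau> powr (s - \<alpha>)) * ennreal (word_radius c r u powr \<alpha>)"
          unfolding wr .
      qed
      also have "\<dots> \<le> ennreal (2 powr s * \<tau> powr (s - \<alpha>)) * (\<Sum>\<^sub>\<infinity>u\<in>RW. ennreal (word_radius c r u powr \<alpha>))"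
        by (rule infsum_cmult_le)
      also have "\<dots> \<le> ennreal (2 powr s * \<tau> powr (s - \<alpha>)) * ennreal S1r"
        using Tle S1r(1) unfolding RW_def n_def by (intro mult_left_mono) auto
      also have "\<dots> = ennreal (2 powr s * \<tau> powr (s - \<alpha>) * S1r)"
        using S1r(2) by (simp add: ennreal_mult)
      also have "\<dots> \<le> ennreal \<epsilon>"
      proof (rule ennreal_leI)
        have "2 powr s * \<tau> powr (s - \<alpha>) * S1r \<le> 2 powr s * (\<epsilon> / C) * S1r"
          using taupow S1r(2) by (intro mult_right_mono mult_left_mono) auto
        also have "\<dots> = \<epsilon> * (S1r / (S1r + 1))"
        proof -
          have P: "2 powr s \<noteq> 0" by simp
          have Q: "S1r + 1 \<noteq> 0" using S1r(2) by simp
          have aux: "\<And>P Q e S::real. P \<noteq> 0 \<Longrightarrow> Q \<noteq> 0 \<Longrightarrow> P * (e / (P * Q)) * S = e * (S / Q)"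
            by simp
          show ?thesis unfolding C_def by (rule aux[OF P Q])
        qed
        also have "\<dots> \<le> \<epsilon> * 1" using \<epsilon> S1r(2) by (intro mult_left_mono) auto
        finally show "2 powr s * \<tau> powr (s - \<alpha>) * S1r \<le> \<epsilon>" by simp
      qed
      finally have "hausdorff_pre s \<delta> \<Lambda> \<le> ennreal \<epsilon>" .
      then show ?thesis by (simp only: add.left_neutral)
    qed
    then have H: "\<And>\<epsilon>. \<epsilon> > 0 \<Longrightarrow> hausdorff_pre s \<delta> \<Lambda> \<le> 0 + ennreal \<epsilon>" .
    have "hausdorff_pre s \<delta> \<Lambda> \<le> 0"
    proof (rule ennreal_le_epsilon)
      fix e :: real assume "0 < e"
      then show "hausdorff_pre s \<delta> \<Lambda> \<le> 0 + ennreal e" by (rule H)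
    qed
    then show ?thesis by (simp only: le_zero_eq)
  qed
  have "(SUP \<delta>\<in>{0<..}. hausdorff_pre s \<delta> \<Lambda>) = (SUP \<delta>\<in>{(0::real)<..}. (0::ennreal))"
    by (rule SUP_cong) (simp_all add: pre0)
  also have "\<dots> = 0" by simp
  finally show ?thesis unfolding hausdorff_measure_def .
qed

end


declare of_real_of_int_eq[simp del]

context hset begin

lemma T1_eq:
  "(\<Sum>\<^sub>\<infinity>w\<in>reduced_words k 1. ennreal (word_radius c r w powr \<alpha>)) = (\<Sum>\<^sub>\<infinity>i\<in>{k<..}. ennreal (r i powr \<alpha>))"
proof -
  have rw: "reduced_words k 1 = (\<lambda>i. [i]) ` {k<..}"
  proof (intro set_eqI iffI)
    fix w assume "w \<in> reduced_words k 1"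
    then have w: "length w = 1" "redw w" unfolding reduced_words_eq by auto
    then obtain i where i: "w = [i]" by (metis One_nat_def length_0_conv length_Suc_conv)
    then have "k < i" using w(2) by (simp add: redw_def)
    then show "w \<in> (\<lambda>i. [i]) ` {k<..}" using i by simp
  next
    fix w assume "w \<in> (\<lambda>i. [i]) ` {k<..}"
    then obtain i where i: "w = [i]" "k < i" by auto
    then show "w \<in> reduced_words k 1" unfolding reduced_words_eq by (simp add: redw_def)
  qed
  have "(\<Sum>\<^sub>\<infinity>w\<in>reduced_words k 1. ennreal (word_radius c r w powr \<alpha>))
      = (\<Sum>\<^sub>\<infinity>i\<in>{k<..}. ((\<lambda>w. ennreal (word_radius c r w powr \<alpha>)) \<circ> (\<lambda>i. [i])) i)"
    unfolding rw by (rule infsum_reindex) (simp add: inj_on_def)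
  also have "\<dots> = (\<Sum>\<^sub>\<infinity>i\<in>{k<..}. ennreal (r i powr \<alpha>))"
  proof (rule infsum_cong)
    fix i assume "i \<in> {k<..}"
    then have "redw [i]" by (simp add: redw_def)
    then have "word_radius c r [i] = r i" using word_radius_eq[of "[i]"] by simp
    then show "((\<lambda>w. ennreal (word_radius c r w powr \<alpha>)) \<circ> (\<lambda>i. [i])) i = ennreal (r i powr \<alpha>)" by simp
  qed
  finally show ?thesis .
qed

end

theorem lemma3p2:
  fixes c :: "nat \<Rightarrow> int" and r :: "nat \<Rightarrow> real" and k :: nat and \<alpha> :: real
    and z0 :: complex
  assumes pos: "\<forall>i\<ge>1. 0 < r i"
    and disj: "\<forall>i\<ge>1. \<forall>j\<ge>1. i \<noteq> j \<longrightarrow>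
               cball (of_int (c i) :: complex) (r i) \<inter> cball (of_int (c j)) (r j) = {}"
    and alpha: "0 < \<alpha>"
    and fin: "(\<Sum>\<^sub>\<infinity>i\<in>{k<..}. ennreal (r i powr \<alpha>)) < \<infinity>"
    and dec: "\<forall>n\<ge>2. (\<Sum>\<^sub>\<infinity>w\<in>reduced_words k n. ennreal (word_radius c r w powr \<alpha>))
                   \<le> (\<Sum>\<^sub>\<infinity>w\<in>reduced_words k (n - 1). ennreal (word_radius c r w powr \<alpha>))"
    and z0: "z0 \<in> upper"
  shows "hausdorff_dim (limit_set (gen_by {gen_map c r i | i. k < i}) z0) \<le> \<alpha>"
proof -
  interpret H: hset c r k using pos disj by unfold_locales
  have small: "\<forall>\<eta>>0. finite {i. k < i \<and> \<eta> \<le> r i}"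
  proof (intro allI impI)
    fix \<eta> :: real assume \<eta>: "\<eta> > 0"
    show "finite {i. k < i \<and> \<eta> \<le> r i}"
    proof (rule ccontr)
      assume inf: "infinite {i. k < i \<and> \<eta> \<le> r i}"
      have b: "ennreal (\<eta> powr \<alpha>) > 0" using \<eta> by simp
      have "(\<Sum>\<^sub>\<infinity>i\<in>{i. k < i \<and> \<eta> \<le> r i}. ennreal (r i powr \<alpha>)) = \<infinity>"
      proof (rule infsum_superconst_infinite_ennreal[OF _ b inf])
        fix i assume "i \<in> {i. k < i \<and> \<eta> \<le> r i}"
        then have "\<eta> powr \<alpha> \<le> r i powr \<alpha>" using \<eta> alpha by (intro powr_mono2) auto
        then show "ennreal (\<eta> powr \<alpha>) \<le> ennreal (r i powr \<alpha>)" by (rule ennreal_leI)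
      qed
      moreover have "(\<Sum>\<^sub>\<infinity>i\<in>{i. k < i \<and> \<eta> \<le> r i}. ennreal (r i powr \<alpha>)) \<le> (\<Sum>\<^sub>\<infinity>i\<in>{k<..}. ennreal (r i powr \<alpha>))"
        by (rule infsum_mono_neutral[OF nonneg_summable_on_complete nonneg_summable_on_complete]) auto
      ultimately show False using fin by simp
    qed
  qed
  define F1 where "F1 = {i. k < i \<and> 1 \<le> r i}"
  have finF1: "finite F1" unfolding F1_def using small by simp
  define R where "R = Max (insert 1 (r ` F1))"
  have Rb: "\<forall>i>k. r i \<le> R"
  proof (intro allI impI)
    fix i assume i: "k < i"
    show "r i \<le> R"
    proof (cases "1 \<le> r i")
      case True
      then have "i \<in> F1" unfolding F1_def using i by simp
      then show ?thesis unfolding R_def using finF1 by (intro Max_ge) auto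
    next
      case False
      moreover have "1 \<le> R" unfolding R_def using finF1 by (intro Max_ge) auto
      ultimately show ?thesis by simp
    qed
  qed
  interpret H3: hset3 c r k R using Rb small by unfold_locales
  define z1 where "z1 = \<i> * complex_of_real (\<bar>R\<bar> + 1)"
  have z1: "Im z1 > 0" unfolding z1_def by simp
  have g: "H.good z1" unfolding H.good_def
  proof (intro allI impI)
    fix i assume i: "k < i"
    have "\<bar>Im (z1 - complex_of_real (H.cc i))\<bar> \<le> cmod (z1 - complex_of_real (H.cc i))" by (rule abs_Im_le_cmod)
    moreover have "Im (z1 - complex_of_real (H.cc i)) = \<bar>R\<bar> + 1" unfolding z1_def by simp
    moreover have "r i \<le> \<bar>R\<bar> + 1" using Rb i by force
    ultimately show "r i \<le> cmod (z1 - complex_of_real (H.cc i))" by simp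
  qed
  have z0': "Im z0 > 0" using z0 unfolding upper_def by simp
  let ?L = "limit_set (gen_by {gen_map c r i | i. k < i}) z0"
  have Lam: "?L \<subseteq> limit_set (gen_by {gen_map c r i | i. k < i}) z1"
    by (rule H.base_change[OF z0' z1])
  have Tle: "\<forall>n\<ge>1. (\<Sum>\<^sub>\<infinity>w\<in>reduced_words k n. ennreal (word_radius c r w powr \<alpha>))
                  \<le> (\<Sum>\<^sub>\<infinity>i\<in>{k<..}. ennreal (r i powr \<alpha>))"
  proof (intro allI impI)
    fix n :: nat assume "1 \<le> n"
    then show "(\<Sum>\<^sub>\<infinity>w\<in>reduced_words k n. ennreal (word_radius c r w powr \<alpha>))
                  \<le> (\<Sum>\<^sub>\<infinity>i\<in>{k<..}. ennreal (r i powr \<alpha>))"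
    proof (induction n rule: dec_induct)
      case base
      then show ?case using H.T1_eq by simp
    next
      case (step m)
      have "(\<Sum>\<^sub>\<infinity>w\<in>reduced_words k (Suc m). ennreal (word_radius c r w powr \<alpha>))
          \<le> (\<Sum>\<^sub>\<infinity>w\<in>reduced_words k (Suc m - 1). ennreal (word_radius c r w powr \<alpha>))"
      proof -
        have "Suc m \<ge> 2" using step(1) by simp
        then show ?thesis using dec by blast
      qed
      then show ?case using step(3) by simp
    qed
  qed
  have H0: "hausdorff_measure s ?L = 0" if "s > \<alpha>" for s
    by (rule H3.haus_zero[OF alpha that fin Tle g z1 Lam])
  define SS where "SS = {s. 0 \<le> s \<and> hausdorff_measure s ?L = 0}"
  have bdd: "bdd_below SS" unfolding SS_def by (rule bdd_belowI[of _ 0]) simp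
  show ?thesis unfolding hausdorff_dim_def SS_def[symmetric]
  proof (rule field_le_epsilon)
    fix e :: real assume e: "0 < e"
    have "\<alpha> + e \<in> SS" unfolding SS_def using H0[of "\<alpha> + e"] e alpha by simp
    then show "Inf SS \<le> \<alpha> + e" using bdd by (rule cInf_lower)
  qed
qed


end
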